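(* Let $p,q,r\in(0,1)$ with $p+q+r=1$. Let $X_1,\eta_2,\eta_3,\ldots$ be independent random variables, each taking the values $1,-1,0$ with probabilities $p,q,r$ respectively, and let $K_3,K_4,\ldots$ be independent random variables, independent of the previous ones, with $K_{n+1}$ uniformly distributed on $\{1,n\}$. Set $X_2=\eta_2X_1$, $X_{n+1}=\eta_{n+1}X_{K_{n+1}}$ for $n\ge2$, and $S_n=\sum_{k=1}^nX_k$. Let $T_n$ denote the partial sums of the same construction with $X_1$ replaced by the constant $1$, and let $\sigma_T^2=\lim_{n\to\infty}\operatorname{Var}(T_n)/n$ (this limit exists). Then, as $n\to\infty$, $\dfrac{S_n-n\frac{(p-q)X_1}{2+q-p}}{\sqrt n}$ converges in distribution to the mixture $(p+q)\mathcal N_{0,\sigma_T^2}+r\delta_0$, i.e. to the law with distribution function $F(x)=(p+q)G(x)+r\,\mathbf 1\{x\ge0\}$, where $G$ is the distribution function of the normal law with mean $0$ and variance $\sigma_T^2$.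
   Context: This is the elephant random walk with delays in which the elephant remembers only the first step and the most recent step: step $n+1$ ($n\ge2$) picks one of $X_1,X_n$ uniformly at random and repeats it (probability $p$), reverses it (probability $q$), or is $0$ (probability $r$). *)

theory Defs
  imports "HOL-Probability.Probability"
begin

text \<open>Elephant random walk with delays, remembering only the first and the most
recent step.  eX X1 eta K n w is the n-th step X_n (n >= 1): X_1 = X1,
X_2 = eta_2 X_1, and X_n = eta_n X_{K_n} for n >= 3 (K_n takes values in {1, n-1}).
On the null event where K_n is not an admissible earlier index the step is set to 0;
X_0 = 0 is unused.\<close>

function eX :: "('a \<Rightarrow> real) \<Rightarrow> (nat \<Rightarrow> 'a \<Rightarrow> real) \<Rightarrow> (nat \<Rightarrow> 'a \<Rightarrow> nat) \<Rightarrow> nat \<Rightarrow> 'a \<Rightarrow> real"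
where
  "eX X1 eta K n w =
     (if n = 1 then X1 w
      else if n = 2 then eta 2 w * X1 w
      else if 3 \<le> n then
        (if 1 \<le> K n w \<and> K n w < n then eta n w * eX X1 eta K (K n w) w else 0)
      else 0)"
  by pat_completeness auto
termination
  by (relation "Wellfounded.measure (\<lambda>(_, _, _, n, _). n)") auto

definition eS :: "('a \<Rightarrow> real) \<Rightarrow> (nat \<Rightarrow> 'a \<Rightarrow> real) \<Rightarrow> (nat \<Rightarrow> 'a \<Rightarrow> nat) \<Rightarrow> nat \<Rightarrow> 'a \<Rightarrow> real"
  where "eS X1 eta K n w = (\<Sum>k=1..n. eX X1 eta K k w)"

definition normal_cdf_var :: "real \<Rightarrow> real \<Rightarrow> real"
  where "normal_cdf_var s x =
    (if s = 0 then (if 0 \<le> x then 1 else 0)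
     else cdf (density lborel (normal_density 0 (sqrt s))) x)"

end

theory Submission
  imports Defs "HOL-Real_Asymp.Real_Asymp"
begin

definition TcW :: "real \<Rightarrow> real \<Rightarrow> real \<Rightarrow> real \<Rightarrow> (real \<Rightarrow> real \<Rightarrow> 'c::real_vector) \<Rightarrow> real \<Rightarrow> real \<Rightarrow> 'c" where
  "TcW p q r m G d y = (p/2) *\<^sub>R G (d+1-m) 1 + (q/2) *\<^sub>R G (d-1-m) (-1) + (r/2) *\<^sub>R G (d-m) 0
     + (p/2) *\<^sub>R G (d+y-m) y + (q/2) *\<^sub>R G (d-y-m) (-y) + (r/2) *\<^sub>R G (d-m) 0"

lemma TcW_G1_raw:
  fixes P Q R A C m d y :: real
  assumes "P = C + A" "Q = C - A" "R = 1 - 2*C" "A*(1+m) = m"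
  shows "TcW P Q R m (\<lambda>d y. d + m * y) d y = d + m * y"
proof -
  have "TcW P Q R m (\<lambda>d y. d + m * y) d y - (d + m * y) = (1 + y) * (A * (1 + m) - m)"
    unfolding TcW_def assms(1-3) by (simp add: field_simps)
  then show ?thesis using assms(4) by simp
qed

lemma TcW_G3_raw:
  fixes P Q R A C m d y :: real
  assumes "P = C + A" "Q = C - A" "R = 1 - 2*C" "A*(1+m) = m"
  shows "TcW P Q R m (\<lambda>d y. d * (y - m)) d y = A * (d * (y - m)) + TcW P Q R m (\<lambda>d y. (y - m)^2) 0 y"
proof -
  have "TcW P Q R m (\<lambda>d y. d * (y - m)) d y - (A * (d * (y - m)) + TcW P Q R m (\<lambda>d y. (y - m)^2) 0 y)
       = d * (A * (1 + m) - m)"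
    unfolding TcW_def assms(1-3) by (simp add: field_simps power2_eq_square)
  then show ?thesis using assms(4) by simp
qed

lemma TcW_F_raw:
  fixes P Q R A C m b d y :: real
  assumes "P = C + A" "Q = C - A" "R = 1 - 2*C" "A*(1+m) = m" "C*(1+b) = b"
  shows "TcW P Q R m (\<lambda>d y. d^2 + 2*m*d*y - 2*(m^2*(1+m)*y + (-(1/2+m)*b)*y^2)) d y
       = d^2 + 2*m*d*y - 2*(m^2*(1+m)*y + (-(1/2+m)*b)*y^2) + (1+2*m)*(b-m^2)"
proof -
  have "TcW P Q R m (\<lambda>d y. d^2 + 2*m*d*y - 2*(m^2*(1+m)*y + (-(1/2+m)*b)*y^2)) d y
       - (d^2 + 2*m*d*y - 2*(m^2*(1+m)*y + (-(1/2+m)*b)*y^2) + (1+2*m)*(b-m^2))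
     = 2*(1+y)*(d-m-m^2)*(A*(1+m)-m) + (1+y^2)*(1+2*m)*(C*(1+b)-b)"
    unfolding TcW_def assms(1-3)
    by (simp add: field_simps power2_eq_square power3_eq_cube)
  then show ?thesis using assms(4,5) by simp
qed


lemma TcW_add: "TcW P Q R m (\<lambda>d y. G d y + H d y) d y = TcW P Q R m G d y + TcW P Q R m H d y"
  unfolding TcW_def by (simp add: algebra_simps)
lemma TcW_diff: "TcW P Q R m (\<lambda>d y. G d y - H d y) d y = TcW P Q R m G d y - TcW P Q R m H d y"
  unfolding TcW_def by (simp add: algebra_simps)
lemma TcW_scale: "TcW P Q R m (\<lambda>d y. c *\<^sub>R G d y) d y = c *\<^sub>R TcW P Q R m G d y"
  unfolding TcW_def by (simp add: algebra_simps)
lemma TcW_rmult: "TcW P Q R m (\<lambda>d y. (c::real) * G d y) d y = c * TcW P Q R m G d y"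
  unfolding TcW_def by (simp add: algebra_simps)
lemma TcW_real_mult: "TcW P Q R m (\<lambda>d y. complex_of_real (A d y) * c) d y = complex_of_real (TcW P Q R m A d y) * c"
  unfolding TcW_def by (simp add: algebra_simps scaleR_conv_of_real)
lemma TcW_const: "P + Q + R = 1 \<Longrightarrow> TcW P Q R m (\<lambda>d y. c) d y = c"
proof -
  assume a: "P + Q + R = 1"
  have "TcW P Q R m (\<lambda>d y. c) d y = (P + Q + R) *\<^sub>R c" unfolding TcW_def by (simp add: algebra_simps flip: scaleR_add_left)
  then show ?thesis using a by simp
qed
lemma TcW_norm_bound:
  assumes "\<And>d' y'. \<bar>y'\<bar> \<le> 1 \<Longrightarrow> \<bar>d'\<bar> \<le> 2 \<Longrightarrow> norm (G d' y') \<le> B" and "\<bar>y\<bar> \<le> 1"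
    and "\<bar>m\<bar> \<le> 1" and "P \<ge> 0" "Q \<ge> 0" "R \<ge> 0" "P + Q + R = 1"
  shows "norm (TcW P Q R m G 0 y) \<le> B"
proof -
  have b: "\<And>y'. \<bar>y'\<bar> \<le> 1 \<Longrightarrow> norm (G (y' - m) y') \<le> B"
    using assms(3) by (intro assms(1)) auto
  have "norm (TcW P Q R m G 0 y) \<le> (P/2) * B + (Q/2) * B + (R/2) * B + (P/2) * B + (Q/2) * B + (R/2) * B"
    unfolding TcW_def using assms(4-6) b[of 1] b[of "-1"] b[of 0] b[of y] b[of "-y"] assms(2)
    by (intro norm_triangle_mono) (auto simp: mult.commute[of B] intro: mult_left_mono)
  also have "\<dots> = B * (P + Q + R)" by (simp add: algebra_simps)
  also have "\<dots> = B" using assms(7) by simp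
  finally show ?thesis .
qed

lemma iexp_shift: "iexp (s * (d + c)) = iexp (s * d) * iexp (s * c)"
  by (simp add: exp_add[symmetric] algebra_simps)
lemma TcW_iexp: "TcW P Q R m (\<lambda>d y. iexp (s * d) * H y) d y = iexp (s * d) * TcW P Q R m (\<lambda>d y. iexp (s * d) * H y) 0 y"
proof -
  have 1: "d + 1 - m = d + (1 - m)" "d - 1 - m = d + (-1-m)" "d - m = d + (-m)" "d + y - m = d + (y - m)" "d - y - m = d + (-y-m)"
    by simp_all
  show ?thesis unfolding TcW_def 1 iexp_shift
    by (simp add: scaleR_conv_of_real algebra_simps)
qed

locale erw_par =
  fixes p q r :: real
  assumes p0: "0 < p" and p1: "p < 1" and q0: "0 < q" and q1: "q < 1"
    and r0: "0 < r" and r1: "r < 1" and pqr: "p + q + r = 1"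
begin

definition "mm = (p - q) / (2 + q - p)"
definition "bb = (p + q) / (2 - p - q)"
definition "al = mm^2 * (1 + mm)"
definition "be = - (1/2 + mm) * bb"
definition "s2 = (1 + 2*mm) * (bb - mm^2)"
definition "kk y = al * y + be * y^2"
definition "aa = (p - q) / 2"
definition "c2 = (p + q) / 2"
definition "Kb = \<bar>al\<bar> + \<bar>be\<bar>"

abbreviation "Tc \<equiv> TcW p q r mm"

lemma den1: "2 + q - p > 0" using p0 p1 q0 q1 by simp
lemma den2: "2 - p - q > 0" using p0 p1 q0 q1 r0 pqr by simp
lemma pe: "p = c2 + aa" unfolding c2_def aa_def by (simp add: field_simps)
lemma qe: "q = c2 - aa" unfolding c2_def aa_def by (simp add: field_simps)
lemma re: "r = 1 - 2*c2" unfolding c2_def using pqr by (simp add: field_simps)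
lemma rho1: "aa * (1 + mm) = mm" using den1 unfolding aa_def mm_def by (simp add: field_simps)
lemma rho2: "c2 * (1 + bb) = bb" using den2 unfolding c2_def bb_def by (simp add: field_simps)

lemma abs_mm: "\<bar>mm\<bar> < 1"
  using den1 p0 p1 q0 q1 unfolding mm_def by (auto simp: abs_less_iff field_simps)
lemma abs_aa: "\<bar>aa\<bar> \<le> 1/2"
  using p0 p1 q0 q1 unfolding aa_def by (auto simp: abs_le_iff)
lemma bb_pos: "bb > 0" using den2 p0 q0 unfolding bb_def by simp
lemma bb_lt1: "bb < 1" using den2 p0 q0 r0 pqr unfolding bb_def by (simp add: field_simps)

lemma s2_pos: "s2 > 0"
proof -
  have h1: "1 + 2*mm > 0" using den1 p0 q0 p1 q1 unfolding mm_def by (simp add: field_simps)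
  have "\<bar>mm\<bar> \<le> bb"
  proof (cases "p \<ge> q")
    case True
    then have "\<bar>mm\<bar> = (p - q) / (2 + q - p)" unfolding mm_def using den1 by simp
    also have "\<dots> \<le> (p + q) / (2 - p - q)"
      using True den1 den2 q0 by (intro frac_le) auto
    finally show ?thesis unfolding bb_def .
  next
    case False
    then have "\<bar>mm\<bar> = (q - p) / (2 + q - p)" unfolding mm_def using den1 by (simp add: abs_if divide_simps)
    also have "\<dots> \<le> (p + q) / (2 - p - q)"
      using False den1 den2 p0 by (intro frac_le) auto
    finally show ?thesis unfolding bb_def .
  qed
  then have "mm^2 < bb"
  proof -
    have "mm^2 = \<bar>mm\<bar> * \<bar>mm\<bar>" by (simp add: power2_eq_square abs_mult[symmetric])
    also have "\<dots> \<le> \<bar>mm\<bar> * bb" using \<open>\<bar>mm\<bar> \<le> bb\<close> by (intro mult_left_mono) auto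
    also have "\<dots> < bb" using abs_mm bb_pos by simp
    finally show ?thesis .
  qed
  then show ?thesis unfolding s2_def using h1 by simp
qed

lemma Tc_G1: "Tc (\<lambda>d y. d + mm * y) d y = d + mm * y"
  by (rule TcW_G1_raw[OF pe qe re rho1])
lemma Tc_G3: "Tc (\<lambda>d y. d * (y - mm)) d y = aa * (d * (y - mm)) + Tc (\<lambda>d y. (y - mm)^2) 0 y"
  by (rule TcW_G3_raw[OF pe qe re rho1])
lemma Tc_F: "Tc (\<lambda>d y. d^2 + 2*mm*d*y - 2*kk y) d y = d^2 + 2*mm*d*y - 2*kk y + s2"
  unfolding kk_def s2_def al_def be_def by (rule TcW_F_raw[OF pe qe re rho1 rho2])
lemma Tc_const: "Tc (\<lambda>d y. c) d y = c" by (rule TcW_const[OF pqr])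

lemma Tc_norm_bound:
  assumes "\<And>d' y'. \<bar>y'\<bar> \<le> 1 \<Longrightarrow> \<bar>d'\<bar> \<le> 2 \<Longrightarrow> norm (G d' y') \<le> B" and "\<bar>y\<bar> \<le> 1"
  shows "norm (Tc G 0 y) \<le> B"
  using assms abs_mm p0 q0 r0 pqr by (intro TcW_norm_bound) auto

lemma kk_bound: "\<bar>y\<bar> \<le> 1 \<Longrightarrow> \<bar>kk y\<bar> \<le> Kb"
proof -
  assume y: "\<bar>y\<bar> \<le> 1"
  have "\<bar>kk y\<bar> \<le> \<bar>al\<bar> * \<bar>y\<bar> + \<bar>be\<bar> * \<bar>y\<bar>^2" unfolding kk_def
    by (metis abs_mult abs_triangle_ineq power_abs)
  also have "\<dots> \<le> \<bar>al\<bar> * 1 + \<bar>be\<bar> * 1"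
    using y by (intro add_mono mult_left_mono) (auto simp: abs_square_le_1)
  finally show ?thesis unfolding Kb_def by simp
qed


lemma Kb_nonneg: "Kb \<ge> 0" unfolding Kb_def by simp

definition fs :: "real \<Rightarrow> real \<Rightarrow> complex" where
  "fs s y = 1 + \<i> * complex_of_real (s * (mm * y)) + complex_of_real (s^2 * kk y)"
definition "Bf s y = Tc (\<lambda>d y'. iexp (s * d) * fs s y') 0 y"
definition "mu s = 1 - s2 * s^2 / 2"
definition "Cc = 6 + 6 * Kb + s2 * (1 + Kb) / 2"

lemma iexp_taylor2: "cmod (iexp x - (1 + \<i> * complex_of_real x - complex_of_real (x^2/2))) \<le> \<bar>x\<bar>^3 / 6"
proof -
  have "(\<Sum>k\<le>2. (\<i> * complex_of_real x)^k / fact k) = 1 + \<i> * complex_of_real x - complex_of_real (x^2/2)"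
    by (simp add: numeral_2_eq_2 power2_eq_square field_simps)
  then show ?thesis using iexp_approx1[of x 2] by (simp add: numeral_3_eq_3 numeral_2_eq_2)
qed

lemma pointwise_bound:
  fixes s d h k :: real
  assumes s: "\<bar>s\<bar> \<le> 1" and d: "\<bar>d\<bar> \<le> 2" and h: "\<bar>h\<bar> \<le> 1" and k: "\<bar>k\<bar> \<le> Kb"
  shows "cmod (iexp (s * d) * (1 + \<i> * complex_of_real (s * h) + complex_of_real (s^2 * k))
     - (1 + \<i> * complex_of_real (s * (d + h)) + complex_of_real (s^2 * (k - d^2/2 - d * h))))
     \<le> (6 + 6 * Kb) * \<bar>s\<bar>^3"
proof -
  define E where "E = 1 + \<i> * complex_of_real (s*d) - complex_of_real ((s*d)^2/2)"
  define R where "R = iexp (s * d) - E"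
  define f where "f = 1 + \<i> * complex_of_real (s * h) + complex_of_real (s^2 * k)"
  have d4: "d^2 \<le> 4"
  proof -
    have "\<bar>d\<bar> * \<bar>d\<bar> \<le> 2 * 2" using d by (intro mult_mono) auto
    then show ?thesis by (simp add: power2_eq_square)
  qed
  have R: "cmod R \<le> \<bar>s*d\<bar>^3 / 6" unfolding R_def E_def by (rule iexp_taylor2)
  have "\<bar>s*d\<bar>^3 = \<bar>s\<bar>^3 * \<bar>d\<bar>^3" by (simp add: abs_mult power_mult_distrib)
  also have "\<dots> \<le> \<bar>s\<bar>^3 * 8" using d by (intro mult_left_mono) (auto intro: order.trans[OF power_mono[of _ 2]])
  finally have R2: "cmod R \<le> \<bar>s\<bar>^3 * 8 / 6" using R by simp
  have f: "cmod f \<le> 2 + Kb"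
  proof -
    have "cmod f \<le> 1 + cmod (\<i> * complex_of_real (s * h)) + cmod (complex_of_real (s^2 * k))"
      unfolding f_def by (intro norm_triangle_mono norm_triangle_ineq order.refl) (auto intro: norm_triangle_le)
    also have "\<dots> = 1 + \<bar>s\<bar> * \<bar>h\<bar> + s^2 * \<bar>k\<bar>" by (simp add: norm_mult abs_mult norm_power)
    also have "\<dots> \<le> 1 + 1 * 1 + 1 * Kb"
      using s h k by (intro add_mono mult_mono) (auto simp: abs_square_le_1)
    finally show ?thesis by simp
  qed
  have eq: "iexp (s * d) * f - (1 + \<i> * complex_of_real (s * (d + h)) + complex_of_real (s^2 * (k - d^2/2 - d * h)))
      = R * f + (\<i> * complex_of_real (s^3 * (d * k - d^2 * h / 2)) - complex_of_real (s^4 * d^2 * k / 2))"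
    unfolding R_def E_def f_def
    by (simp add: algebra_simps power2_eq_square power3_eq_cube power4_eq_xxxx)
  have "cmod (R * f + (\<i> * complex_of_real (s^3 * (d * k - d^2 * h / 2)) - complex_of_real (s^4 * d^2 * k / 2)))
      \<le> cmod R * cmod f + (\<bar>s\<bar>^3 * \<bar>d * k - d^2 * h / 2\<bar> + \<bar>s\<bar>^4 * d^2 * \<bar>k\<bar> / 2)"
  proof (intro order.trans[OF norm_triangle_ineq] add_mono)
    show "cmod (R * f) \<le> cmod R * cmod f" by (simp add: norm_mult)
    have "cmod (\<i> * complex_of_real (s^3 * (d * k - d^2 * h / 2)) - complex_of_real (s^4 * d^2 * k / 2))
       \<le> \<bar>s^3 * (d * k - d^2 * h / 2)\<bar> + \<bar>s^4 * d^2 * k / 2\<bar>"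
      by (rule order.trans[OF norm_triangle_ineq4]) (simp only: norm_mult norm_of_real norm_ii mult_1_left order.refl)
    then show "cmod (\<i> * complex_of_real (s^3 * (d * k - d^2 * h / 2)) - complex_of_real (s^4 * d^2 * k / 2))
       \<le> \<bar>s\<bar>^3 * \<bar>d * k - d^2 * h / 2\<bar> + \<bar>s\<bar>^4 * d^2 * \<bar>k\<bar> / 2"
      by (simp add: abs_mult power_abs)
  qed
  also have "\<dots> \<le> (\<bar>s\<bar>^3 * 8 / 6) * (2 + Kb) + (\<bar>s\<bar>^3 * (2 * Kb + 4 * 1 / 2) + \<bar>s\<bar>^3 * 4 * Kb / 2)"
  proof (intro add_mono)
    show "cmod R * cmod f \<le> (\<bar>s\<bar>^3 * 8 / 6) * (2 + Kb)"
      using R2 f by (intro mult_mono) auto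
    have "\<bar>d * k - d^2 * h / 2\<bar> \<le> \<bar>d\<bar> * \<bar>k\<bar> + d^2 * \<bar>h\<bar> / 2"
      by (simp add: abs_mult abs_triangle_ineq4 order.trans[OF abs_triangle_ineq4])
    also have "\<dots> \<le> 2 * Kb + 4 * 1 / 2"
      using d k h d4 by (intro add_mono mult_mono divide_right_mono) auto
    finally have "\<bar>d * k - d^2 * h / 2\<bar> \<le> 2 * Kb + 4 * 1 / 2" .
    then show "\<bar>s\<bar>^3 * \<bar>d * k - d^2 * h / 2\<bar> \<le> \<bar>s\<bar>^3 * (2 * Kb + 4 * 1 / 2)"
      by (intro mult_left_mono) auto
    have s4: "\<bar>s\<bar>^4 \<le> \<bar>s\<bar>^3" using s by (intro power_decreasing) auto
    from d4 show "\<bar>s\<bar>^4 * d^2 * \<bar>k\<bar> / 2 \<le> \<bar>s\<bar>^3 * 4 * Kb / 2"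
      using s4 k by (intro divide_right_mono mult_mono) auto
  qed
  also have "\<dots> \<le> (6 + 6 * Kb) * \<bar>s\<bar>^3"
    using Kb_nonneg by (simp add: algebra_simps)
  finally show ?thesis using eq unfolding f_def by simp
qed


lemma norm_ii_plus: "cmod (\<i> * complex_of_real a + complex_of_real b) \<le> \<bar>a\<bar> + \<bar>b\<bar>"
  by (rule order.trans[OF norm_triangle_ineq]) (simp only: norm_mult norm_of_real norm_ii mult_1_left order.refl)

definition "Qf s d y = 1 + \<i> * complex_of_real (s * (d + mm * y)) + complex_of_real (s^2 * (kk y - d^2/2 - d * (mm * y)))"

lemma Tc_Qf: "Tc (Qf s) 0 y = 1 + \<i> * complex_of_real (s * (mm * y)) + complex_of_real (s^2 * (kk y - s2/2))"
proof -
  define g1 where "g1 = (\<lambda>d y. d + mm * y)"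
  define h2 where "h2 = (\<lambda>d y. (-1/2) * (d^2 + 2*mm*d*y - 2*kk y))"
  have eq: "Qf s = (\<lambda>d y. (complex_of_real 1 * 1 + complex_of_real (g1 d y) * (\<i> * complex_of_real s))
      + complex_of_real (h2 d y) * complex_of_real (s^2))"
    by (auto simp: fun_eq_iff Qf_def g1_def h2_def algebra_simps)
  have h: "Tc h2 0 y = kk y - s2/2"
  proof -
    have "Tc h2 0 y = (-1/2) * Tc (\<lambda>d y. d^2 + 2*mm*d*y - 2*kk y) 0 y"
      unfolding h2_def by (rule TcW_rmult)
    then show ?thesis using Tc_F[of 0 y] by (simp add: field_simps)
  qed
  have g: "Tc g1 0 y = mm * y" unfolding g1_def using Tc_G1[of 0 y] by simp
  have "Tc (Qf s) 0 y = complex_of_real (Tc (\<lambda>d y. 1) 0 y) * 1 + complex_of_real (Tc g1 0 y) * (\<i> * complex_of_real s)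
      + complex_of_real (Tc h2 0 y) * complex_of_real (s^2)"
    unfolding eq by (simp only: TcW_add TcW_real_mult)
  also have "\<dots> = 1 + \<i> * complex_of_real (s * (mm * y)) + complex_of_real (s^2 * (kk y - s2/2))"
    unfolding h g Tc_const by (simp add: algebra_simps)
  finally show ?thesis .
qed

lemma Bf_bound:
  assumes s: "\<bar>s\<bar> \<le> 1" and y: "\<bar>y\<bar> \<le> 1"
  shows "cmod (Bf s y - complex_of_real (mu s) * fs s y) \<le> Cc * \<bar>s\<bar>^3"
proof -
  have split: "Bf s y - complex_of_real (mu s) * fs s y
     = Tc (\<lambda>d y'. iexp (s * d) * fs s y' - Qf s d y') 0 y + (Tc (Qf s) 0 y - complex_of_real (mu s) * fs s y)"
    unfolding Bf_def TcW_diff by simp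
  have b1: "cmod (Tc (\<lambda>d y'. iexp (s * d) * fs s y' - Qf s d y') 0 y) \<le> (6 + 6 * Kb) * \<bar>s\<bar>^3"
  proof (rule Tc_norm_bound[OF _ y])
    fix d' y' :: real assume y': "\<bar>y'\<bar> \<le> 1" and d': "\<bar>d'\<bar> \<le> 2"
    have h: "\<bar>mm * y'\<bar> \<le> 1" using abs_mm y' by (simp add: abs_mult mult_le_one)
    show "cmod (iexp (s * d') * fs s y' - Qf s d' y') \<le> (6 + 6 * Kb) * \<bar>s\<bar>^3"
      using pointwise_bound[OF s d' h kk_bound[OF y']] unfolding fs_def Qf_def by simp
  qed
  have e2: "Tc (Qf s) 0 y - complex_of_real (mu s) * fs s y
     = complex_of_real (s2 * s^2 / 2) * (\<i> * complex_of_real (s * (mm * y)) + complex_of_real (s^2 * kk y))"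
    unfolding Tc_Qf fs_def mu_def by (simp add: algebra_simps)
  have "cmod (Tc (Qf s) 0 y - complex_of_real (mu s) * fs s y)
      \<le> (s2 * s^2 / 2) * (\<bar>s * (mm * y)\<bar> + \<bar>s^2 * kk y\<bar>)"
  proof -
    have "cmod (Tc (Qf s) 0 y - complex_of_real (mu s) * fs s y)
       = (s2 * s^2 / 2) * cmod (\<i> * complex_of_real (s * (mm * y)) + complex_of_real (s^2 * kk y))"
      unfolding e2 norm_mult norm_of_real using s2_pos by simp
    also have "\<dots> \<le> (s2 * s^2 / 2) * (\<bar>s * (mm * y)\<bar> + \<bar>s^2 * kk y\<bar>)"
      using s2_pos by (intro mult_left_mono norm_ii_plus) auto
    finally show ?thesis .
  qed
  also have "\<dots> \<le> (s2 * s^2 / 2) * (\<bar>s\<bar> * 1 + \<bar>s\<bar> * Kb)"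
  proof (intro mult_left_mono add_mono)
    have "\<bar>mm\<bar> * \<bar>y\<bar> \<le> 1" using abs_mm y by (intro mult_le_one) auto
    then show "\<bar>s * (mm * y)\<bar> \<le> \<bar>s\<bar> * 1" by (simp add: abs_mult mult_left_le)
    have "s^2 \<le> \<bar>s\<bar>" using s by (metis abs_le_square_iff abs_of_nonneg abs_ge_zero power2_abs power_le_one[of "\<bar>s\<bar>" 1] mult_left_le_one_le power2_eq_square abs_mult_self_eq)
    then show "\<bar>s^2 * kk y\<bar> \<le> \<bar>s\<bar> * Kb"
      using kk_bound[OF y] by (simp add: abs_mult) (intro mult_mono, auto)
  qed (use s2_pos in auto)
  also have "\<dots> = (s2 * (1 + Kb) / 2) * \<bar>s\<bar>^3" by (simp add: power2_eq_square power3_eq_cube algebra_simps)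
  finally have b2: "cmod (Tc (Qf s) 0 y - complex_of_real (mu s) * fs s y) \<le> (s2 * (1 + Kb) / 2) * \<bar>s\<bar>^3" .
  show ?thesis unfolding split Cc_def
    using order.trans[OF norm_triangle_ineq add_mono[OF b1 b2]] by (simp add: algebra_simps)
qed

end

definition cl :: "real \<Rightarrow> real" where "cl v = (if v = 1 then 1 else if v = -1 then -1 else 0)"

lemma cl_vals: "cl v \<in> {-1,0,1}" unfolding cl_def by auto
lemma cl_meas[measurable]: "cl \<in> borel_measurable borel" unfolding cl_def by measurable

fun ycore :: "(nat + nat \<Rightarrow> real) \<Rightarrow> nat \<Rightarrow> real" where
  "ycore g 0 = 1"
| "ycore g (Suc n) = (if n = 0 then 1 else cl (g (Inl (Suc n))) * (if n = 1 \<or> g (Inr (Suc n)) = 1 then 1 else ycore g n))"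

definition "tcore g n = (\<Sum>k=1..n. ycore g k)"
definition "vcore g n = (cl (g (Inl 1)), tcore g n, ycore g n)"
definition Jn :: "nat \<Rightarrow> (nat + nat) set" where "Jn n = Inl ` {1..n} \<union> Inr ` {3..n}"

lemma ycore_vals: "ycore g n \<in> {-1,0,1}"
  by (induction n) (auto simp: cl_def)
lemma abs_ycore: "\<bar>ycore g n\<bar> \<le> 1"
  using ycore_vals[of g n] by auto

lemma tcore_Suc: "tcore g (Suc n) = tcore g n + ycore g (Suc n)"
  unfolding tcore_def by simp

lemma tcore_int: "\<exists>i::int. tcore g n = of_int i \<and> - int n \<le> i \<and> i \<le> int n"
proof (induction n)
  case 0 then show ?case by (simp add: tcore_def)
next
  case (Suc n)
  then obtain i where i: "tcore g n = of_int i" "- int n \<le> i" "i \<le> int n" by blast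
  have "ycore g (Suc n) \<in> {-1,0,1}" by (rule ycore_vals)
  then consider "ycore g (Suc n) = -1" | "ycore g (Suc n) = 0" | "ycore g (Suc n) = 1" by auto
  then show ?case
  proof cases
    case 1 then show ?thesis using i by (intro exI[of _ "i - 1"]) (simp add: tcore_Suc)
  next
    case 2 then show ?thesis using i by (intro exI[of _ "i"]) (simp add: tcore_Suc)
  next
    case 3 then show ?thesis using i by (intro exI[of _ "i + 1"]) (simp add: tcore_Suc)
  qed
qed

lemma Jn_mono: "m \<le> n \<Longrightarrow> Jn m \<subseteq> Jn n"
  unfolding Jn_def by auto

lemma ycore_dep: "(\<And>i. i \<in> Jn n \<Longrightarrow> g i = g' i) \<Longrightarrow> ycore g n = ycore g' n"
proof (induction n)
  case 0 then show ?case by simp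
next
  case (Suc n)
  have IH: "ycore g n = ycore g' n" using Suc.prems Jn_mono[of n "Suc n"] by (intro Suc.IH) auto
  show ?case
  proof (cases "n = 0")
    case True then show ?thesis by simp
  next
    case False
    have a: "g (Inl (Suc n)) = g' (Inl (Suc n))" using Suc.prems by (auto simp: Jn_def)
    show ?thesis
    proof (cases "n = 1")
      case True then show ?thesis using a by simp
    next
      case n1: False
      have b: "g (Inr (Suc n)) = g' (Inr (Suc n))" using Suc.prems False n1 by (auto simp: Jn_def)
      show ?thesis using a b IH by simp
    qed
  qed
qed

lemma tcore_dep: assumes "\<And>i. i \<in> Jn n \<Longrightarrow> g i = g' i" shows "tcore g n = tcore g' n"
  unfolding tcore_def
proof (intro sum.cong refl ycore_dep)
  fix k i assume "k \<in> {1..n}" "i \<in> Jn k"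
  then show "g i = g' i" using Jn_mono[of k n] assms by auto
qed

lemma vcore_dep: "1 \<le> n \<Longrightarrow> (\<And>i. i \<in> Jn n \<Longrightarrow> g i = g' i) \<Longrightarrow> vcore g n = vcore g' n"
  unfolding vcore_def using tcore_dep[of n g g'] ycore_dep[of n g g'] by (auto simp: Jn_def)

lemma ycore_meas: "Jn n \<subseteq> J \<Longrightarrow> (\<lambda>g. ycore g n) \<in> borel_measurable (PiM J (\<lambda>_. borel))"
proof (induction n)
  case 0 then show ?case by simp
next
  case (Suc n)
  have IH: "(\<lambda>g. ycore g n) \<in> borel_measurable (PiM J (\<lambda>_. borel))" using Suc.prems Jn_mono[of n "Suc n"] by (intro Suc.IH) auto
  show ?case
  proof (cases "n = 0")
    case True then show ?thesis by simp
  next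
    case False
    have a: "Inl (Suc n) \<in> J" using Suc.prems by (auto simp: Jn_def)
    have ma: "(\<lambda>g. cl (g (Inl (Suc n)))) \<in> borel_measurable (PiM J (\<lambda>_. borel))"
      using a by measurable
    show ?thesis
    proof (cases "n = 1")
      case True then show ?thesis using ma by simp
    next
      case n1: False
      have b: "Inr (Suc n) \<in> J" using Suc.prems False n1 by (auto simp: Jn_def)
      have mb: "(\<lambda>g. g (Inr (Suc n))) \<in> borel_measurable (PiM J (\<lambda>_. borel))"
        using b by measurable
      have "(\<lambda>g. cl (g (Inl (Suc n))) * (if g (Inr (Suc n)) = 1 then 1 else ycore g n)) \<in> borel_measurable (PiM J (\<lambda>_. borel))"
        using ma mb IH by measurable
      then show ?thesis using False n1 by simp
    qed
  qed
qed

lemma tcore_meas: "Jn n \<subseteq> J \<Longrightarrow> (\<lambda>g. tcore g n) \<in> borel_measurable (PiM J (\<lambda>_. borel))"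
  unfolding tcore_def
proof (intro borel_measurable_sum ycore_meas)
  fix k assume "Jn n \<subseteq> J" "k \<in> {1..n}"
  then show "Jn k \<subseteq> J" using Jn_mono[of k n] by auto
qed

lemma vcore_sets: assumes "1 \<le> n" "Jn n \<subseteq> J"
  shows "{g \<in> space (PiM J (\<lambda>_. borel)). vcore g n = v} \<in> sets (PiM J (\<lambda>_. borel))"
proof -
  have a: "Inl 1 \<in> J" using assms by (auto simp: Jn_def)
  have [measurable]: "(\<lambda>g. cl (g (Inl 1))) \<in> borel_measurable (PiM J (\<lambda>_. borel))" using a by measurable
  have [measurable]: "(\<lambda>g. tcore g n) \<in> borel_measurable (PiM J (\<lambda>_. borel))" by (rule tcore_meas[OF assms(2)])
  have [measurable]: "(\<lambda>g. ycore g n) \<in> borel_measurable (PiM J (\<lambda>_. borel))" by (rule ycore_meas[OF assms(2)])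
  have "{g \<in> space (PiM J (\<lambda>_. borel)). vcore g n = v} =
     {g \<in> space (PiM J (\<lambda>_. borel)). cl (g (Inl 1)) = fst v \<and> tcore g n = fst (snd v) \<and> ycore g n = snd (snd v)}"
    unfolding vcore_def by (cases v) auto
  also have "\<dots> \<in> sets (PiM J (\<lambda>_. borel))" by measurable
  finally show ?thesis .
qed

lemma (in prob_space) E_finite:
  fixes V :: "'a \<Rightarrow> 'b" and F :: "'b \<Rightarrow> 'c::{banach,second_countable_topology}"
  assumes S: "finite S" and VS: "\<And>w. w \<in> space M \<Longrightarrow> V w \<in> S"
    and ev: "\<And>v. v \<in> S \<Longrightarrow> {w\<in>space M. V w = v} \<in> events"
  shows "integral\<^sup>L M (\<lambda>w. F (V w)) = (\<Sum>v\<in>S. prob {w\<in>space M. V w = v} *\<^sub>R F v)"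
proof -
  have "integral\<^sup>L M (\<lambda>w. F (V w)) = integral\<^sup>L M (\<lambda>w. \<Sum>v\<in>S. indicator {w\<in>space M. V w = v} w *\<^sub>R F v)"
  proof (rule Bochner_Integration.integral_cong[OF refl])
    fix w assume w: "w \<in> space M"
    have "(\<Sum>v\<in>S. indicator {w\<in>space M. V w = v} w *\<^sub>R F v) = (\<Sum>v\<in>S. if v = V w then F v else 0)"
      using w by (intro sum.cong refl) (auto simp: indicator_def)
    also have "\<dots> = F (V w)" using VS[OF w] S by (simp add: sum.delta')
    finally show "F (V w) = (\<Sum>v\<in>S. indicator {w\<in>space M. V w = v} w *\<^sub>R F v)" by simp
  qed
  also have "\<dots> = (\<Sum>v\<in>S. integral\<^sup>L M (\<lambda>w. indicator {w\<in>space M. V w = v} w *\<^sub>R F v))"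
    using ev by (intro Bochner_Integration.integral_sum integrable_scaleR_left integrable_real_indicator) (auto simp: less_top[symmetric])
  also have "\<dots> = (\<Sum>v\<in>S. prob {w\<in>space M. V w = v} *\<^sub>R F v)"
  proof (intro sum.cong refl)
    fix v assume "v \<in> S"
    have "integral\<^sup>L M (\<lambda>w. indicator {w\<in>space M. V w = v} w *\<^sub>R F v) = integral\<^sup>L M (indicator {w\<in>space M. V w = v}) *\<^sub>R F v"
      using ev[OF \<open>v \<in> S\<close>] by (intro integral_scaleR_left integrable_real_indicator) (auto simp: less_top[symmetric])
    also have "\<dots> = prob {w\<in>space M. V w = v} *\<^sub>R F v"
      by (simp add: Int_absorb2 Collect_subset[of "space M", simplified] inf.absorb1)
    finally show "integral\<^sup>L M (\<lambda>w. indicator {w\<in>space M. V w = v} w *\<^sub>R F v) = prob {w\<in>space M. V w = v} *\<^sub>R F v" .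
  qed
  finally show ?thesis .
qed

locale erw_prob = erw_par p q r + prob_space M
  for p q r :: real and M :: "'a measure" +
  fixes X1 :: "'a \<Rightarrow> real" and eta :: "nat \<Rightarrow> 'a \<Rightarrow> real" and K :: "nat \<Rightarrow> 'a \<Rightarrow> nat"
  assumes X1m: "X1 \<in> borel_measurable M"
    and etam: "\<And>n. 2 \<le> n \<Longrightarrow> eta n \<in> borel_measurable M"
    and Km: "\<And>n. 3 \<le> n \<Longrightarrow> K n \<in> measurable M (count_space UNIV)"
    and PX1: "measure M {w \<in> space M. X1 w = 1} = p" "measure M {w \<in> space M. X1 w = -1} = q"
      "measure M {w \<in> space M. X1 w = 0} = r"
    and Peta1: "\<And>n. 2 \<le> n \<Longrightarrow> measure M {w \<in> space M. eta n w = 1} = p"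
    and Peta2: "\<And>n. 2 \<le> n \<Longrightarrow> measure M {w \<in> space M. eta n w = -1} = q"
    and Peta3: "\<And>n. 2 \<le> n \<Longrightarrow> measure M {w \<in> space M. eta n w = 0} = r"
    and PK1: "\<And>n. 3 \<le> n \<Longrightarrow> measure M {w \<in> space M. K n w = 1} = 1/2"
    and PK2: "\<And>n. 3 \<le> n \<Longrightarrow> measure M {w \<in> space M. K n w = n - 1} = 1/2"
    and indep: "prob_space.indep_vars M (\<lambda>_. borel)
           (\<lambda>i. case i of Inl n \<Rightarrow> (if n = 1 then X1 else eta n)
                        | Inr n \<Rightarrow> (\<lambda>w. real (K n w)))
           (Inl ` {n. 1 \<le> n} \<union> Inr ` {n. 3 \<le> n})"
begin

definition "Xf = (\<lambda>i. case i of Inl n \<Rightarrow> (if n = 1 then X1 else eta n) | Inr n \<Rightarrow> (\<lambda>w. real (K n w)))"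
definition "II = Inl ` {n::nat. 1 \<le> n} \<union> Inr ` {n::nat. 3 \<le> n}"
definition "samp w = (\<lambda>i. Xf i w)"
definition "V n w = vcore (samp w) n"

lemma indepX: "indep_vars (\<lambda>_. borel) Xf II"
  using indep unfolding Xf_def II_def .

lemma Xf_meas: "i \<in> II \<Longrightarrow> Xf i \<in> borel_measurable M"
  using indepX unfolding indep_vars_def2 by auto

lemma Jn_II: "Jn n \<subseteq> II" unfolding Jn_def II_def by auto

lemma samp_Inl: "samp w (Inl n) = (if n = 1 then X1 w else eta n w)" unfolding samp_def Xf_def by simp
lemma samp_Inr: "samp w (Inr n) = real (K n w)" unfolding samp_def Xf_def by simp

lemma restr_meas: "J \<subseteq> II \<Longrightarrow> (\<lambda>w. restrict (samp w) J) \<in> measurable M (PiM J (\<lambda>_. borel))"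
  unfolding samp_def using Xf_meas by (intro measurable_restrict) auto

lemma V_restr: "1 \<le> n \<Longrightarrow> V n w = vcore (restrict (samp w) (Jn n)) n"
  unfolding V_def by (intro vcore_dep) auto

lemma V_sets: assumes "1 \<le> n" shows "{w\<in>space M. V n w = v} \<in> events"
proof -
  have "{w\<in>space M. V n w = v} = (\<lambda>w. restrict (samp w) (Jn n)) -` {g \<in> space (PiM (Jn n) (\<lambda>_. borel)). vcore g n = v} \<inter> space M"
    using V_restr[OF assms] by (auto simp: space_PiM)
  also have "\<dots> \<in> events"
    by (rule measurable_sets[OF restr_meas[OF Jn_II] vcore_sets[OF assms order.refl]])
  finally show ?thesis .
qed


definition "ec n w = cl (eta n w)"
definition "kc n w = (K n w = 1)"
definition "pe e = (if e = 1 then p else if e = -1 then q else if e = 0 then r else 0)"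

lemma eq_sets: "f \<in> borel_measurable M \<Longrightarrow> {w\<in>space M. f w = (c::real)} \<in> events"
  using borel_measurable_vimage[of f M c] by (simp add: vimage_def Int_def conj_commute)

lemma K_sets: "3 \<le> n \<Longrightarrow> {w\<in>space M. K n w = c} \<in> events"
  using measurable_sets[OF Km, of n "{c}"] by (simp add: vimage_def Int_def conj_commute)

lemma cl_probs:
  assumes f: "f \<in> borel_measurable M" and f1: "prob {w\<in>space M. f w = 1} = p"
    and f2: "prob {w\<in>space M. f w = -1} = q" and f3: "prob {w\<in>space M. f w = 0} = r"
  shows "prob {w\<in>space M. cl (f w) = e} = pe e" and "AE w in M. f w \<in> {1,-1,0}"
proof -
  have A: "{w\<in>space M. f w = 1} \<in> events" "{w\<in>space M. f w = -1} \<in> events" "{w\<in>space M. f w = 0} \<in> events"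
    using eq_sets[OF f] by auto
  have u: "prob ({w\<in>space M. f w = 1} \<union> {w\<in>space M. f w = -1}) = p + q"
    using A f1 f2 by (subst finite_measure_Union) auto
  have "prob ({w\<in>space M. f w = 1} \<union> {w\<in>space M. f w = -1} \<union> {w\<in>space M. f w = 0}) = p + q + r"
    using A u f3 by (subst finite_measure_Union) auto
  moreover have "{w\<in>space M. f w \<in> {1,-1,0}} = {w\<in>space M. f w = 1} \<union> {w\<in>space M. f w = -1} \<union> {w\<in>space M. f w = 0}"
    by auto
  ultimately have "prob {w\<in>space M. f w \<in> {1,-1,0}} = 1" using pqr by simp
  then show "AE w in M. f w \<in> {1,-1,0}" using AE_prob_1 by force
  show "prob {w\<in>space M. cl (f w) = e} = pe e"
  proof -
    consider "e = 1" | "e = -1" | "e = 0" | "e \<notin> {1,-1,0}" by auto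
    then show ?thesis
    proof cases
      case 1
      then have "{w\<in>space M. cl (f w) = e} = {w\<in>space M. f w = 1}" by (auto simp: cl_def)
      then show ?thesis using f1 1 by (simp add: pe_def)
    next
      case 2
      then have "{w\<in>space M. cl (f w) = e} = {w\<in>space M. f w = -1}" by (auto simp: cl_def)
      then show ?thesis using f2 2 by (simp add: pe_def)
    next
      case 3
      then have "{w\<in>space M. cl (f w) = e} = space M - ({w\<in>space M. f w = 1} \<union> {w\<in>space M. f w = -1})"
        by (auto simp: cl_def)
      then have "prob {w\<in>space M. cl (f w) = e} = 1 - (p + q)" using u A by (simp add: prob_compl sets.Un)
      then show ?thesis using 3 pqr by (simp add: pe_def)
    next
      case 4
      then have "{w\<in>space M. cl (f w) = e} = {}" using cl_vals by auto
      then show ?thesis using 4 unfolding pe_def by (simp only:) simp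
    qed
  qed
qed

lemma P_ec: "2 \<le> n \<Longrightarrow> prob {w\<in>space M. ec n w = e} = pe e"
  unfolding ec_def by (rule cl_probs(1)[OF etam Peta1 Peta2 Peta3])
lemma P_X1: "prob {w\<in>space M. cl (X1 w) = e} = pe e"
  by (rule cl_probs(1)[OF X1m PX1])
lemma AE_X1: "AE w in M. X1 w \<in> {1,-1,0}"
  by (rule cl_probs(2)[OF X1m PX1])
lemma AE_eta: "2 \<le> n \<Longrightarrow> AE w in M. eta n w \<in> {1,-1,0}"
  by (rule cl_probs(2)[OF etam Peta1 Peta2 Peta3])

lemma P_kc: assumes "3 \<le> n" shows "prob {w\<in>space M. kc n w = k} = 1/2"
proof (cases k)
  case True
  then show ?thesis using PK1[OF assms] unfolding kc_def by simp
next
  case False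
  have "{w\<in>space M. kc n w = k} = space M - {w\<in>space M. K n w = 1}" using False unfolding kc_def by auto
  then show ?thesis using PK1[OF assms] K_sets[OF assms] by (simp add: prob_compl)
qed

lemma AE_K: assumes "3 \<le> n" shows "AE w in M. K n w = 1 \<or> K n w = n - 1"
proof -
  have "prob ({w\<in>space M. K n w = 1} \<union> {w\<in>space M. K n w = n - 1}) = 1/2 + 1/2"
    using PK1[OF assms] PK2[OF assms] K_sets[OF assms] assms by (subst finite_measure_Union) auto
  moreover have "{w\<in>space M. K n w = 1 \<or> K n w = n - 1} = {w\<in>space M. K n w = 1} \<union> {w\<in>space M. K n w = n - 1}"
    by auto
  ultimately have "prob {w\<in>space M. K n w = 1 \<or> K n w = n - 1} = 1" by simp
  then show ?thesis using AE_prob_1 by force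
qed


lemma restrict_space: "restrict g J \<in> space (PiM J (\<lambda>_. borel))"
  by (auto simp: space_PiM)

lemma indep_step:
  assumes n: "2 \<le> n"
  shows "prob ({w\<in>space M. V n w = v} \<inter> {w\<in>space M. ec (Suc n) w = e} \<inter> {w\<in>space M. kc (Suc n) w = k})
       = prob {w\<in>space M. V n w = v} * prob {w\<in>space M. ec (Suc n) w = e} * prob {w\<in>space M. kc (Suc n) w = k}"
proof -
  define Kf :: "nat \<Rightarrow> (nat+nat) set" where "Kf j = (if j = 0 then Jn n else if j = 1 then {Inl (Suc n)} else {Inr (Suc n)})" for j
  define A :: "nat \<Rightarrow> ((nat+nat) \<Rightarrow> real) set" where "A j = (if j = 0 then {g \<in> space (PiM (Jn n) (\<lambda>_. borel)). vcore g n = v}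
      else if j = 1 then {g \<in> space (PiM {Inl (Suc n)} (\<lambda>_. borel)). cl (g (Inl (Suc n))) = e}
      else {g \<in> space (PiM {Inr (Suc n)} (\<lambda>_. borel)). (g (Inr (Suc n)) = 1) = k})" for j
  have ind: "indep_vars (\<lambda>j. PiM (Kf j) (\<lambda>_. borel)) (\<lambda>j w. restrict (\<lambda>i. Xf i w) (Kf j)) {0,1,2}"
    by (rule indep_vars_restrict[OF indepX]) (use n in \<open>auto simp: Kf_def Jn_def II_def disjoint_family_on_def\<close>)
  have sets: "A j \<in> sets (PiM (Kf j) (\<lambda>_. borel))" if jj: "j \<in> {0,1,2}" for j
  proof -
    consider "j = 0" | "j = 1" | "j = 2" using jj by blast
    then show ?thesis
    proof cases
      case 1 then show ?thesis using vcore_sets[of n "Jn n" v] n by (simp add: A_def Kf_def)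
    next
      case 2
      have m: "(\<lambda>g. cl (g (Inl (Suc n)))) \<in> borel_measurable (PiM {Inl (Suc n)} (\<lambda>_. borel))" by measurable
      have "{g \<in> space (PiM {Inl (Suc n)} (\<lambda>_. borel)). cl (g (Inl (Suc n))) = e} \<in> sets (PiM {Inl (Suc n)} (\<lambda>_. borel))"
        using borel_measurable_vimage[OF m, of e] by (simp add: vimage_def Int_def conj_commute)
      then show ?thesis using 2 by (simp add: A_def Kf_def)
    next
      case 3
      have m: "(\<lambda>g::nat+nat\<Rightarrow>real. g (Inr (Suc n))) \<in> borel_measurable (PiM {Inr (Suc n)} (\<lambda>_. borel))" by measurable
      have s1: "{g \<in> space (PiM {Inr (Suc n)::nat+nat} (\<lambda>_. borel)). g (Inr (Suc n)) = (1::real)} \<in> sets (PiM {Inr (Suc n)::nat+nat} (\<lambda>_. borel))"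
        using borel_measurable_vimage[OF m, of 1] by (simp add: vimage_def Int_def conj_commute)
      have "{g \<in> space (PiM {Inr (Suc n)::nat+nat} (\<lambda>_. borel)). (g (Inr (Suc n)) = (1::real)) = k} \<in> sets (PiM {Inr (Suc n)::nat+nat} (\<lambda>_. borel))"
      proof (cases k)
        case True then show ?thesis using s1 by simp
      next
        case False
        then have "{g \<in> space (PiM {Inr (Suc n)::nat+nat} (\<lambda>_. borel)). (g (Inr (Suc n)) = (1::real)) = k}
            = space (PiM {Inr (Suc n)::nat+nat} (\<lambda>_. borel)) - {g \<in> space (PiM {Inr (Suc n)::nat+nat} (\<lambda>_. borel)). g (Inr (Suc n)) = (1::real)}"
          by auto
        then show ?thesis using s1 by auto
      qed
      then show ?thesis using 3 by (simp add: A_def Kf_def)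
    qed
  qed
  have eq: "prob (\<Inter>j\<in>{0,1,2}. (\<lambda>w. restrict (\<lambda>i. Xf i w) (Kf j)) -` A j \<inter> space M)
      = (\<Prod>j\<in>{0,1,2}. prob ((\<lambda>w. restrict (\<lambda>i. Xf i w) (Kf j)) -` A j \<inter> space M))"
    by (rule indep_varsD[OF ind]) (use sets in auto)
  have s0: "(\<lambda>w. restrict (\<lambda>i. Xf i w) (Kf 0)) -` A 0 \<inter> space M = {w\<in>space M. V n w = v}"
    using V_restr[of n] n restrict_space unfolding A_def Kf_def samp_def[abs_def] by auto
  have s1: "(\<lambda>w. restrict (\<lambda>i. Xf i w) (Kf 1)) -` A 1 \<inter> space M = {w\<in>space M. ec (Suc n) w = e}"
    using n restrict_space unfolding A_def Kf_def ec_def by (auto simp: Xf_def)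
  have s2: "(\<lambda>w. restrict (\<lambda>i. Xf i w) (Kf 2)) -` A 2 \<inter> space M = {w\<in>space M. kc (Suc n) w = k}"
    using n restrict_space unfolding A_def Kf_def kc_def by (auto simp: Xf_def)
  show ?thesis using eq unfolding s0[symmetric] s1[symmetric] s2[symmetric]
    by (simp add: Int_assoc Int_ac)
qed

lemma V1: "V 1 w = (cl (X1 w), 1, 1)"
  unfolding V_def vcore_def tcore_def by (simp add: samp_Inl)

lemma indep_one:
  "prob ({w\<in>space M. cl (X1 w) = x} \<inter> {w\<in>space M. ec 2 w = e})
       = prob {w\<in>space M. cl (X1 w) = x} * prob {w\<in>space M. ec 2 w = e}"
proof -
  define A :: "nat + nat \<Rightarrow> real set" where "A i = (if i = Inl 1 then cl -` {x} else cl -` {e})" for i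
  have sets: "A i \<in> sets borel" for i
    using borel_measurable_vimage[OF cl_meas, of x] borel_measurable_vimage[OF cl_meas, of e] by (simp add: A_def)
  have eq: "prob (\<Inter>i\<in>{Inl 1, Inl 2}. Xf i -` A i \<inter> space M) = (\<Prod>i\<in>{Inl 1, Inl 2}. prob (Xf i -` A i \<inter> space M))"
    by (rule indep_varsD[OF indepX]) (auto simp: II_def sets)
  have a: "Xf (Inl 1) -` A (Inl 1) \<inter> space M = {w\<in>space M. cl (X1 w) = x}" by (auto simp: Xf_def A_def)
  have b: "Xf (Inl 2) -` A (Inl 2) \<inter> space M = {w\<in>space M. ec 2 w = e}" by (auto simp: Xf_def A_def ec_def)
  have i1: "(\<Inter>i\<in>{Inl 1, Inl 2}. Xf i -` A i \<inter> space M) = (Xf (Inl 1) -` A (Inl 1) \<inter> space M) \<inter> (Xf (Inl 2) -` A (Inl 2) \<inter> space M)"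
    by auto
  have i2: "(\<Prod>i\<in>{Inl 1, Inl 2}. f i) = f (Inl 1) * (f (Inl 2) :: real)" for f :: "nat + nat \<Rightarrow> real" by simp
  show ?thesis using eq unfolding i1 i2 a b .
qed


definition Top :: "(real \<times> real \<times> real \<Rightarrow> 'c::real_vector) \<Rightarrow> real \<times> real \<times> real \<Rightarrow> 'c" where
  "Top F v = (case v of (x,t,y) \<Rightarrow> (p/2) *\<^sub>R F (x,t+1,1) + (q/2) *\<^sub>R F (x,t-1,-1) + (r/2) *\<^sub>R F (x,t,0)
      + (p/2) *\<^sub>R F (x,t+y,y) + (q/2) *\<^sub>R F (x,t-y,-y) + (r/2) *\<^sub>R F (x,t,0))"

definition Sn :: "nat \<Rightarrow> (real \<times> real \<times> real) set" where
  "Sn n = {-1,0,1} \<times> (real_of_int ` {- int n..int n}) \<times> {-1,0,1}"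
definition "S1 = ({-1,0,1} \<times> {1} \<times> {1} :: (real \<times> real \<times> real) set)"

definition EE :: "nat \<Rightarrow> (real \<times> real \<times> real \<Rightarrow> 'c::{banach,second_countable_topology}) \<Rightarrow> 'c" where
  "EE n F = integral\<^sup>L M (\<lambda>w. F (V n w))"

lemma finite_Sn: "finite (Sn n)" unfolding Sn_def by auto
lemma finite_S1: "finite S1" unfolding S1_def by auto

lemma V_in_Sn: "V n w \<in> Sn n"
proof -
  obtain i where i: "tcore (samp w) n = of_int i" "- int n \<le> i" "i \<le> int n" using tcore_int by blast
  show ?thesis unfolding V_def vcore_def Sn_def using cl_vals ycore_vals i by auto
qed

lemma V_in_S1: "V 1 w \<in> S1" unfolding V1 S1_def using cl_vals by auto

lemma E_sum: "1 \<le> n \<Longrightarrow> EE n F = (\<Sum>v\<in>Sn n. prob {w\<in>space M. V n w = v} *\<^sub>R F v)"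
  unfolding EE_def by (rule E_finite[OF finite_Sn V_in_Sn V_sets])

lemma E_sum1: "EE 1 F = (\<Sum>v\<in>S1. prob {w\<in>space M. V 1 w = v} *\<^sub>R F v)"
  unfolding EE_def by (rule E_finite[OF finite_S1 V_in_S1 V_sets]) simp

lemma ec_sets: "2 \<le> n \<Longrightarrow> {w\<in>space M. ec n w = e} \<in> events"
  unfolding ec_def by (rule eq_sets) (use etam in measurable)

lemma kc_sets: assumes "3 \<le> n" shows "{w\<in>space M. kc n w = k} \<in> events"
proof (cases k)
  case True then show ?thesis using K_sets[OF assms] by (simp add: kc_def)
next
  case False
  then have "{w\<in>space M. kc n w = k} = space M - {w\<in>space M. K n w = 1}" by (auto simp: kc_def)
  then show ?thesis using K_sets[OF assms] by auto
qed

lemma sum_prod: "sum g (A \<times> B) = (\<Sum>a\<in>A. \<Sum>b\<in>B. g (a,b))"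
  by (simp add: sum.cartesian_product)

lemma sum_E3: "(\<Sum>e\<in>{1,-1,0::real}. f e) = f 1 + f (-1) + f 0"
  by (simp add: add.assoc)

lemma halves3: "(a/2) *\<^sub>R A + (b/2) *\<^sub>R B + (c/2) *\<^sub>R C + (a/2) *\<^sub>R A + (b/2) *\<^sub>R B + (c/2) *\<^sub>R C
   = a *\<^sub>R A + b *\<^sub>R B + c *\<^sub>R (C::'c::real_vector)"
proof -
  have "a *\<^sub>R A + b *\<^sub>R B + c *\<^sub>R C = (a/2 + a/2) *\<^sub>R A + (b/2 + b/2) *\<^sub>R B + (c/2 + c/2) *\<^sub>R C" by simp
  also have "\<dots> = (a/2) *\<^sub>R A + (b/2) *\<^sub>R B + (c/2) *\<^sub>R C + (a/2) *\<^sub>R A + (b/2) *\<^sub>R B + (c/2) *\<^sub>R C"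
    by (simp only: scaleR_add_left add_ac)
  finally show ?thesis by simp
qed

lemma Top_y1: "Top F (x,t,1) = p *\<^sub>R F (x,t+1,1) + q *\<^sub>R F (x,t-1,-1) + r *\<^sub>R F (x,t,0)"
  unfolding Top_def by (simp add: halves3)

lemma one_step2:
  fixes F :: "real \<times> real \<times> real \<Rightarrow> 'c::{banach,second_countable_topology}"
  assumes n: "2 \<le> n"
  shows "EE (Suc n) F = EE n (Top F)"
proof -
  define \<Gamma> :: "(real\<times>real\<times>real) \<times> real \<times> bool \<Rightarrow> real\<times>real\<times>real" where
    "\<Gamma> u = (case u of ((x,t,y),e,k) \<Rightarrow> (x, t + e * (if k then 1 else y), e * (if k then 1 else y)))" for u
  define W where "W w = (V n w, ec (Suc n) w, kc (Suc n) w)" for w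
  define S where "S = Sn n \<times> {1,-1,0::real} \<times> (UNIV::bool set)"
  have VS: "V (Suc n) w = \<Gamma> (W w)" for w
    using n by (cases "kc (Suc n) w")
      (auto simp: \<Gamma>_def W_def V_def vcore_def tcore_Suc samp_Inl samp_Inr ec_def kc_def)
  have WS: "W w \<in> S" for w
    unfolding W_def S_def ec_def using V_in_Sn cl_vals by auto
  have Wset: "{w\<in>space M. W w = (v,e,k)} = {w\<in>space M. V n w = v} \<inter> {w\<in>space M. ec (Suc n) w = e} \<inter> {w\<in>space M. kc (Suc n) w = k}"
    for v e k unfolding W_def by auto
  have Wev: "{w\<in>space M. W w = u} \<in> events" for u
    using Wset[of "fst u" "fst (snd u)" "snd (snd u)"] V_sets[of n] ec_sets[of "Suc n"] kc_sets[of "Suc n"] n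
    by (cases u) auto
  have "EE (Suc n) F = integral\<^sup>L M (\<lambda>w. (F \<circ> \<Gamma>) (W w))" unfolding EE_def VS by simp
  also have "\<dots> = (\<Sum>u\<in>S. prob {w\<in>space M. W w = u} *\<^sub>R (F \<circ> \<Gamma>) u)"
    by (rule E_finite[OF _ WS Wev]) (simp add: S_def finite_Sn)
  also have "\<dots> = (\<Sum>v\<in>Sn n. prob {w\<in>space M. V n w = v} *\<^sub>R Top F v)"
    unfolding S_def sum_prod
  proof (intro sum.cong refl)
    fix v assume "v \<in> Sn n"
    obtain x t y where v: "v = (x,t,y)" by (cases v) auto
    have P: "prob {w\<in>space M. W w = (v,e,k)} = prob {w\<in>space M. V n w = v} * pe e * (1/2)" for e k
    proof -
      have "prob {w\<in>space M. ec (Suc n) w = e} = pe e" using n by (intro P_ec) simp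
      moreover have "prob {w\<in>space M. kc (Suc n) w = k} = 1/2" using n by (intro P_kc) simp
      ultimately show ?thesis unfolding Wset indep_step[OF n] by simp
    qed
    show "(\<Sum>e\<in>{1,-1,0}. \<Sum>k\<in>UNIV. prob {w\<in>space M. W w = (v,e,k)} *\<^sub>R (F \<circ> \<Gamma>) (v,e,k))
        = prob {w\<in>space M. V n w = v} *\<^sub>R Top F v"
      unfolding P sum_E3 UNIV_bool
      by (simp add: v \<Gamma>_def Top_def pe_def scaleR_add_right algebra_simps)
  qed
  also have "\<dots> = EE n (Top F)" using n by (simp add: E_sum)
  finally show ?thesis .
qed

lemma one_step1:
  fixes F :: "real \<times> real \<times> real \<Rightarrow> 'c::{banach,second_countable_topology}"
  shows "EE 2 F = EE 1 (Top F)"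
proof -
  define \<Gamma> :: "(real\<times>real\<times>real) \<times> real \<Rightarrow> real\<times>real\<times>real" where
    "\<Gamma> u = (case u of ((x,t,y),e) \<Rightarrow> (x, t + e, e))" for u
  define W where "W w = (V 1 w, ec 2 w)" for w
  define S where "S = S1 \<times> {1,-1,0::real}"
  have VS: "V 2 w = \<Gamma> (W w)" for w
    by (simp add: \<Gamma>_def W_def V1 ec_def) (simp add: V_def vcore_def tcore_def samp_Inl numeral_2_eq_2)
  have WS: "W w \<in> S" for w
    unfolding W_def S_def ec_def using V_in_S1 cl_vals by auto
  have Wset: "{w\<in>space M. W w = ((x,1,1),e)} = {w\<in>space M. cl (X1 w) = x} \<inter> {w\<in>space M. ec 2 w = e}"
    for x e unfolding W_def V1 by auto
  have Wev: "{w\<in>space M. W w = u} \<in> events" for u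
  proof -
    have "{w\<in>space M. W w = u} = {w\<in>space M. V 1 w = fst u} \<inter> {w\<in>space M. ec 2 w = snd u}"
      unfolding W_def by (cases u) auto
    then show ?thesis using V_sets[of 1] ec_sets[of 2] by auto
  qed
  have "EE 2 F = integral\<^sup>L M (\<lambda>w. (F \<circ> \<Gamma>) (W w))" unfolding EE_def VS by simp
  also have "\<dots> = (\<Sum>u\<in>S. prob {w\<in>space M. W w = u} *\<^sub>R (F \<circ> \<Gamma>) u)"
    by (rule E_finite[OF _ WS Wev]) (simp add: S_def finite_S1)
  also have "\<dots> = (\<Sum>v\<in>S1. prob {w\<in>space M. V 1 w = v} *\<^sub>R Top F v)"
    unfolding S_def sum_prod
  proof (intro sum.cong refl)
    fix v assume "v \<in> S1"
    then obtain x where v: "v = (x,1,1)" unfolding S1_def by auto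
    have P: "prob {w\<in>space M. W w = (v,e)} = prob {w\<in>space M. V 1 w = v} * pe e" for e
    proof -
      have "{w\<in>space M. V 1 w = v} = {w\<in>space M. cl (X1 w) = x}" unfolding v V1 by auto
      moreover have "prob {w\<in>space M. ec 2 w = e} = pe e" by (intro P_ec) simp
      ultimately show ?thesis unfolding v Wset indep_one by simp
    qed
    show "(\<Sum>e\<in>{1,-1,0}. prob {w\<in>space M. W w = (v,e)} *\<^sub>R (F \<circ> \<Gamma>) (v,e))
        = prob {w\<in>space M. V 1 w = v} *\<^sub>R Top F v"
      unfolding P sum_E3
      by (simp add: v Top_y1 \<Gamma>_def pe_def scaleR_add_right algebra_simps)
  qed
  also have "\<dots> = EE 1 (Top F)" by (rule E_sum1[symmetric])
  finally show ?thesis .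
qed

lemma one_step: "1 \<le> n \<Longrightarrow> EE (Suc n) F = EE n (Top F)"
  using one_step1[of F] one_step2[of n F] by (cases "n = 1") (auto simp: numeral_2_eq_2)

end

context erw_prob begin

lemma EE1: "EE 1 F = p *\<^sub>R F (1,1,1) + q *\<^sub>R F (-1,1,1) + r *\<^sub>R F (0,1,1)"
proof -
  have S: "S1 = (\<lambda>x. (x,1,1)) ` {1,-1,0}" unfolding S1_def by auto
  have inj: "inj_on (\<lambda>x::real. (x,1::real,1::real)) {1,-1,0}" by (auto simp: inj_on_def)
  have P: "prob {w\<in>space M. V 1 w = (x,1,1)} = pe x" for x
  proof -
    have "{w\<in>space M. V 1 w = (x,1,1)} = {w\<in>space M. cl (X1 w) = x}" unfolding V1 by auto
    then show ?thesis using P_X1 by simp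
  qed
  show ?thesis unfolding E_sum1 S sum.reindex[OF inj] comp_def P sum_E3
    by (simp add: pe_def add.assoc)
qed

lemma E_total: "1 \<le> n \<Longrightarrow> (\<Sum>v\<in>Sn n. prob {w\<in>space M. V n w = v}) = 1"
  using E_sum[of n "\<lambda>_. 1::real"] by (simp add: EE_def prob_space)

lemma E_bound:
  fixes F :: "real \<times> real \<times> real \<Rightarrow> 'c::{banach,second_countable_topology}"
  assumes n: "1 \<le> n" and B: "\<And>x t y. \<bar>y\<bar> \<le> 1 \<Longrightarrow> norm (F (x,t,y)) \<le> B"
  shows "norm (EE n F) \<le> B"
proof -
  have "norm (EE n F) \<le> (\<Sum>v\<in>Sn n. norm (prob {w\<in>space M. V n w = v} *\<^sub>R F v))"
    unfolding E_sum[OF n] by (rule norm_sum)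
  also have "\<dots> \<le> (\<Sum>v\<in>Sn n. prob {w\<in>space M. V n w = v} * B)"
  proof (intro sum_mono)
    fix v assume "v \<in> Sn n"
    then obtain x t y where v: "v = (x,t,y)" "\<bar>y\<bar> \<le> 1" unfolding Sn_def by auto
    show "norm (prob {w\<in>space M. V n w = v} *\<^sub>R F v) \<le> prob {w\<in>space M. V n w = v} * B"
      using B[OF v(2), of x t] unfolding v(1) by (simp add: mult_left_mono)
  qed
  also have "\<dots> = B" using E_total[OF n] by (simp add: sum_distrib_right[symmetric])
  finally show ?thesis .
qed

lemma E_add: "1 \<le> n \<Longrightarrow> EE n (\<lambda>v. F v + G v) = EE n F + EE n G"
  by (simp add: E_sum scaleR_add_right sum.distrib)
lemma E_diff: "1 \<le> n \<Longrightarrow> EE n (\<lambda>v. F v - G v) = EE n F - EE n G"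
  by (simp add: E_sum scaleR_diff_right sum_subtractf)
lemma E_scale: "1 \<le> n \<Longrightarrow> EE n (\<lambda>v. c *\<^sub>R F v) = c *\<^sub>R EE n F"
  by (simp add: E_sum scaleR_sum_right mult.commute)
lemma E_rmult: "1 \<le> n \<Longrightarrow> EE n (\<lambda>v. (c::real) * F v) = c * EE n F"
  using E_scale[of n c F] by simp
lemma E_const: "1 \<le> n \<Longrightarrow> EE n (\<lambda>v. c) = c"
  using E_total by (simp add: E_sum scaleR_sum_left[symmetric])

lemma E_iter: "EE (Suc k) F = EE 1 ((Top ^^ k) F)"
proof (induction k arbitrary: F)
  case 0 then show ?case by simp
next
  case (Suc k)
  have "EE (Suc (Suc k)) F = EE (Suc k) (Top F)" by (rule one_step) simp
  also have "\<dots> = EE 1 ((Top ^^ k) (Top F))" by (rule Suc.IH)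
  also have "\<dots> = EE 1 ((Top ^^ Suc k) F)" by (simp add: funpow_swap1)
  finally show ?case .
qed

definition "fixx x0 F = (\<lambda>(x::real,t::real,y::real). F (x0,t,y))"

lemma Top_fixx: "Top (fixx x0 F) = fixx x0 (Top F)"
  by (auto simp: fun_eq_iff fixx_def Top_def)

lemma iter_fixx: "(Top ^^ k) (fixx x0 F) = fixx x0 ((Top ^^ k) F)"
  by (induction k) (simp_all add: Top_fixx)

lemma EE1_fixx: "EE 1 (fixx x0 F) = F (x0,1,1)"
proof -
  have "EE 1 (fixx x0 F) = (p + q + r) *\<^sub>R F (x0,1,1)" unfolding EE1 by (simp add: fixx_def scaleR_add_left)
  then show ?thesis using pqr by simp
qed

lemma E_fact:
  assumes n: "1 \<le> n"
  shows "EE n F = p *\<^sub>R EE n (fixx 1 F) + q *\<^sub>R EE n (fixx (-1) F) + r *\<^sub>R EE n (fixx 0 F)"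
proof -
  obtain k where k: "n = Suc k" using n by (cases n) auto
  show ?thesis unfolding k E_iter iter_fixx EE1_fixx unfolding EE1 ..
qed

definition cen :: "nat \<Rightarrow> (real \<Rightarrow> real \<Rightarrow> 'c) \<Rightarrow> real \<times> real \<times> real \<Rightarrow> 'c" where
  "cen n G = (\<lambda>(x,t,y). G (t - real n * mm) y)"
definition "Ec n G = EE n (cen n G)"

lemma Top_cen: "Top (cen (Suc n) G) = cen n (Tc G)"
proof (rule ext)
  fix v :: "real \<times> real \<times> real"
  obtain x t y where v: "v = (x,t,y)" by (cases v) auto
  have e: "t + 1 - real (Suc n) * mm = (t - real n * mm) + 1 - mm"
    "t - 1 - real (Suc n) * mm = (t - real n * mm) - 1 - mm"
    "t - real (Suc n) * mm = (t - real n * mm) - mm"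
    "t + y - real (Suc n) * mm = (t - real n * mm) + y - mm"
    "t - y - real (Suc n) * mm = (t - real n * mm) - y - mm"
    by (simp_all add: algebra_simps)
  show "Top (cen (Suc n) G) v = cen n (Tc G) v"
    unfolding v Top_def cen_def TcW_def by (simp only: prod.case e)
qed

lemma Ec_step: "1 \<le> n \<Longrightarrow> Ec (Suc n) G = Ec n (Tc G)"
  unfolding Ec_def by (simp add: one_step Top_cen)

lemma Ec_one: "Ec 1 G = G (1 - mm) 1"
proof -
  have "Ec 1 G = (p + q + r) *\<^sub>R G (1 - mm) 1" unfolding Ec_def EE1 by (simp add: cen_def scaleR_add_left)
  then show ?thesis using pqr by simp
qed

lemma cen_add: "cen n (\<lambda>d y. G d y + H d y) = (\<lambda>v. cen n G v + cen n H v)"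
  by (auto simp: fun_eq_iff cen_def)
lemma cen_diff: "cen n (\<lambda>d y. G d y - H d y) = (\<lambda>v. cen n G v - cen n H v)"
  by (auto simp: fun_eq_iff cen_def)
lemma cen_rmult: "cen n (\<lambda>d y. (c::real) * G d y) = (\<lambda>v. c * cen n G v)"
  by (auto simp: fun_eq_iff cen_def)
lemma cen_const: "cen n (\<lambda>d y. c) = (\<lambda>v. c)"
  by (auto simp: fun_eq_iff cen_def)

lemma Ec_add: "1 \<le> n \<Longrightarrow> Ec n (\<lambda>d y. G d y + H d y) = Ec n G + Ec n H"
  unfolding Ec_def cen_add by (rule E_add)
lemma Ec_diff: "1 \<le> n \<Longrightarrow> Ec n (\<lambda>d y. G d y - H d y) = Ec n G - Ec n H"
  unfolding Ec_def cen_diff by (rule E_diff)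
lemma Ec_rmult: "1 \<le> n \<Longrightarrow> Ec n (\<lambda>d y. (c::real) * G d y) = c * Ec n G"
  unfolding Ec_def cen_rmult by (rule E_rmult)
lemma Ec_const: "1 \<le> n \<Longrightarrow> Ec n (\<lambda>d y. c) = c"
  unfolding Ec_def cen_const by (rule E_const)
lemma Ec_bound:
  fixes G :: "real \<Rightarrow> real \<Rightarrow> 'c::{banach,second_countable_topology}"
  assumes "1 \<le> n" "\<And>d y. \<bar>y\<bar> \<le> 1 \<Longrightarrow> norm (G d y) \<le> B"
  shows "norm (Ec n G) \<le> B"
  unfolding Ec_def using assms by (intro E_bound) (auto simp: cen_def)

end

context erw_prob begin

lemma Ec_scale: "1 \<le> n \<Longrightarrow> Ec n (\<lambda>d y. c *\<^sub>R G d y) = c *\<^sub>R Ec n G"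
proof -
  assume n: "1 \<le> n"
  have "cen n (\<lambda>d y. c *\<^sub>R G d y) = (\<lambda>v. c *\<^sub>R cen n G v)" by (auto simp: fun_eq_iff cen_def)
  then show ?thesis unfolding Ec_def using E_scale[OF n] by simp
qed

lemma Ec_one': "Ec (Suc 0) G = G (1 - mm) 1" using Ec_one by simp

lemma Ec_G1: "1 \<le> n \<Longrightarrow> Ec n (\<lambda>d y. d + mm * y) = 1"
proof (induction n rule: dec_induct)
  case base then show ?case by (simp add: Ec_one')
next
  case (step n)
  have "Ec (Suc n) (\<lambda>d y. d + mm * y) = Ec n (Tc (\<lambda>d y. d + mm * y))" using step by (simp add: Ec_step)
  also have "Tc (\<lambda>d y. d + mm * y) = (\<lambda>d y. d + mm * y)" by (auto simp: fun_eq_iff Tc_G1)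
  finally show ?case using step by simp
qed

definition "Fq d y = d^2 + 2*mm*d*y - 2*kk y"

lemma Ec_Fq: "1 \<le> n \<Longrightarrow> Ec n Fq = Fq (1 - mm) 1 + (real n - 1) * s2"
proof (induction n rule: dec_induct)
  case base then show ?case by (simp add: Ec_one')
next
  case (step n)
  have "Ec (Suc n) Fq = Ec n (Tc Fq)" using step by (simp add: Ec_step)
  also have "Tc Fq = (\<lambda>d y. Fq d y + s2)" unfolding Fq_def by (auto simp: fun_eq_iff Tc_F)
  also have "Ec n (\<lambda>d y. Fq d y + s2) = Ec n Fq + s2" using step by (simp add: Ec_add Ec_const)
  finally show ?case using step by (simp add: algebra_simps)
qed

definition "wv y = Tc (\<lambda>d y. (y - mm)^2) 0 y"

lemma wv_bound: assumes y: "\<bar>y\<bar> \<le> 1" shows "\<bar>wv y\<bar> \<le> 4"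
proof -
  have "norm (Tc (\<lambda>d y. (y - mm)^2) 0 y) \<le> 4"
  proof (rule Tc_norm_bound[OF _ y])
  fix d' y' :: real assume y': "\<bar>y'\<bar> \<le> 1"
  have "\<bar>y' - mm\<bar> \<le> 2" using y' abs_mm by simp
  then have "\<bar>y' - mm\<bar> * \<bar>y' - mm\<bar> \<le> 2 * 2" by (intro mult_mono) auto
  then show "norm ((y' - mm)^2) \<le> 4" by (simp add: power2_eq_square abs_mult_self_eq)
  qed
  then show ?thesis unfolding wv_def by simp
qed

lemma Ec_G3: "1 \<le> n \<Longrightarrow> \<bar>Ec n (\<lambda>d y. d * (y - mm))\<bar> \<le> 8"
proof (induction n rule: dec_induct)
  case base
  have "\<bar>1 - mm\<bar> \<le> 2" using abs_mm by simp
  then have "\<bar>1 - mm\<bar> * \<bar>1 - mm\<bar> \<le> 2 * 2" by (intro mult_mono) auto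
  then show ?case by (simp add: Ec_one' abs_mult)
next
  case (step n)
  have "Ec (Suc n) (\<lambda>d y. d * (y - mm)) = Ec n (Tc (\<lambda>d y. d * (y - mm)))" using step by (simp add: Ec_step)
  also have "Tc (\<lambda>d y. d * (y - mm)) = (\<lambda>d y. aa * (d * (y - mm)) + wv y)" unfolding wv_def by (auto simp: fun_eq_iff Tc_G3)
  also have "Ec n (\<lambda>d y. aa * (d * (y - mm)) + wv y) = aa * Ec n (\<lambda>d y. d * (y - mm)) + Ec n (\<lambda>d y. wv y)"
    using step by (simp add: Ec_add Ec_rmult)
  finally have eq: "Ec (Suc n) (\<lambda>d y. d * (y - mm)) = aa * Ec n (\<lambda>d y. d * (y - mm)) + Ec n (\<lambda>d y. wv y)" .
  have b1: "\<bar>Ec n (\<lambda>d y. wv y)\<bar> \<le> 4" using Ec_bound[of n "\<lambda>d y. wv y" 4] step wv_bound by simp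
  have "\<bar>aa * Ec n (\<lambda>d y. d * (y - mm))\<bar> \<le> 1/2 * 8"
    unfolding abs_mult using abs_aa step.IH by (intro mult_mono) auto
  then show ?case unfolding eq using b1 by simp
qed

lemma Ec_y: "1 \<le> n \<Longrightarrow> \<bar>Ec n (\<lambda>d y. y)\<bar> \<le> 1"
  using Ec_bound[of n "\<lambda>d y. y" 1] by simp
lemma Ec_kk: "1 \<le> n \<Longrightarrow> \<bar>Ec n (\<lambda>d y. kk y)\<bar> \<le> Kb"
  using Ec_bound[of n "\<lambda>d y. kk y" Kb] kk_bound by simp

definition "Tn n w = tcore (samp w) n"

lemma Tn_meas: "Tn n \<in> borel_measurable M"
proof -
  have "Tn n = (\<lambda>w. tcore (restrict (samp w) (Jn n)) n)"
    unfolding Tn_def by (auto simp: fun_eq_iff intro!: tcore_dep)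
  also have "\<dots> \<in> borel_measurable M"
    by (rule measurable_compose[OF restr_meas[OF Jn_II] tcore_meas[OF order.refl]])
  finally show ?thesis .
qed

lemma Tn_EE: "1 \<le> n \<Longrightarrow> integral\<^sup>L M (\<lambda>w. G (Tn n w)) = EE n (\<lambda>(x,t,y). G t)"
  unfolding EE_def Tn_def V_def vcore_def by simp

lemma var_formula:
  assumes n: "1 \<le> n"
  shows "variance (Tn n) = Ec n (\<lambda>d y. d^2) - (Ec n (\<lambda>d y. d))^2"
proof -
  define \<mu> where "\<mu> = expectation (Tn n)"
  define \<delta> where "\<delta> = Ec n (\<lambda>d y. d)"
  have mu: "\<mu> = \<delta> + real n * mm"
  proof -
    have "\<mu> = EE n (\<lambda>(x,t,y). t)" unfolding \<mu>_def using Tn_EE[OF n, of "\<lambda>t. t"] by simp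
    also have "(\<lambda>(x::real,t::real,y::real). t) = (\<lambda>v. cen n (\<lambda>d y. d) v + real n * mm)"
      by (auto simp: fun_eq_iff cen_def)
    also have "EE n \<dots> = \<delta> + real n * mm" unfolding \<delta>_def Ec_def using n by (simp add: E_add E_const)
    finally show ?thesis .
  qed
  have "variance (Tn n) = EE n (\<lambda>(x,t,y). (t - \<mu>)^2)" unfolding \<mu>_def[symmetric] using Tn_EE[OF n, of "\<lambda>t. (t - \<mu>)^2"] by simp
  also have "(\<lambda>(x::real,t::real,y::real). (t - \<mu>)^2) = cen n (\<lambda>d y. d^2 - 2 * \<delta> * d + \<delta>^2)"
    unfolding mu by (auto simp: fun_eq_iff cen_def power2_eq_square algebra_simps)
  also have "EE n \<dots> = Ec n (\<lambda>d y. d^2) - 2 * \<delta> * \<delta> + \<delta>^2"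
    unfolding Ec_def[symmetric] using n by (simp add: Ec_add Ec_diff Ec_rmult Ec_const \<delta>_def)
  finally show ?thesis unfolding \<delta>_def by (simp add: power2_eq_square)
qed

lemma abs7: "\<bar>a - b - c - d + e + f - g\<bar> \<le> \<bar>a\<bar> + \<bar>b\<bar> + \<bar>c\<bar> + \<bar>d\<bar> + \<bar>e\<bar> + \<bar>f\<bar> + \<bar>g::real\<bar>"
  by (smt (verit))

lemma var_approx:
  assumes n: "1 \<le> n"
  shows "\<bar>variance (Tn n) - real n * s2\<bar> \<le> \<bar>Fq (1 - mm) 1\<bar> + s2 + 16 + 2 + 2 + 2 * Kb + 4"
proof -
  define Ey where "Ey = Ec n (\<lambda>d y. y)"
  define e3 where "e3 = Ec n (\<lambda>d y. d * (y - mm))"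
  define Ek where "Ek = Ec n (\<lambda>d y. kk y)"
  have d1: "Ec n (\<lambda>d y. d) = 1 - mm * Ey"
  proof -
    have "Ec n (\<lambda>d y. d) = Ec n (\<lambda>d y. (d + mm * y) - mm * y)" by simp
    also have "\<dots> = 1 - mm * Ey" using n by (simp only: Ec_diff Ec_rmult Ec_G1 Ey_def)
    finally show ?thesis .
  qed
  have d2: "Ec n (\<lambda>d y. d^2) = Ec n Fq - 2*mm*e3 - 2*mm^2*1 + 2*mm^3*Ey + 2*Ek"
  proof -
    define g1 where "g1 = (\<lambda>d y. d + mm * y)"
    have g1: "Ec n g1 = 1" unfolding g1_def by (rule Ec_G1[OF n])
    have "Ec n (\<lambda>d y. d^2) = Ec n (\<lambda>d y. Fq d y - 2*mm*(d*(y-mm)) - 2*mm^2*g1 d y + 2*mm^3*y + 2*kk y)"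
      by (rule arg_cong[where f="Ec n"]) (auto simp: fun_eq_iff Fq_def g1_def power2_eq_square power3_eq_cube algebra_simps)
    also have "\<dots> = Ec n Fq - 2*mm*e3 - 2*mm^2*1 + 2*mm^3*Ey + 2*Ek"
      using n by (simp only: Ec_add Ec_diff Ec_rmult g1 Ey_def e3_def Ek_def)
    finally show ?thesis .
  qed
  have bEy: "\<bar>Ey\<bar> \<le> 1" unfolding Ey_def by (rule Ec_y[OF n])
  have be3: "\<bar>e3\<bar> \<le> 8" unfolding e3_def by (rule Ec_G3[OF n])
  have bEk: "\<bar>Ek\<bar> \<le> Kb" unfolding Ek_def by (rule Ec_kk[OF n])
  have m1: "\<bar>mm\<bar> \<le> 1" using abs_mm by simp
  have t1: "\<bar>2*mm*e3\<bar> \<le> 16"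
  proof -
    have "\<bar>mm\<bar> * \<bar>e3\<bar> \<le> 1 * 8" using m1 be3 by (intro mult_mono) auto
    then show ?thesis by (simp add: abs_mult mult.commute)
  qed
  have t2: "\<bar>2*mm^2*1\<bar> \<le> 2"
  proof -
    have "mm^2 \<le> 1" using m1 by (simp add: abs_square_le_1)
    then show ?thesis by simp
  qed
  have t3: "\<bar>2*mm^3*Ey\<bar> \<le> 2"
  proof -
    have "\<bar>mm\<bar>^3 \<le> 1" using m1 by (simp add: power_le_one)
    then have "\<bar>mm\<bar>^3 * \<bar>Ey\<bar> \<le> 1 * 1" using bEy by (intro mult_mono) auto
    then show ?thesis by (simp add: abs_mult power_abs)
  qed
  have t4: "((Ec n (\<lambda>d y. d))^2) \<le> 4"
  proof -
    have "\<bar>mm * Ey\<bar> \<le> 1" using m1 bEy by (simp add: abs_mult mult_le_one)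
    then have "\<bar>Ec n (\<lambda>d y. d)\<bar> \<le> 2" unfolding d1 by simp
    then have "\<bar>Ec n (\<lambda>d y. d)\<bar> * \<bar>Ec n (\<lambda>d y. d)\<bar> \<le> 2 * 2" by (intro mult_mono) auto
    then show ?thesis by (simp add: power2_eq_square abs_mult_self_eq)
  qed
  have "variance (Tn n) - real n * s2 = Fq (1 - mm) 1 - s2 - 2*mm*e3 - 2*mm^2*1 + 2*mm^3*Ey + 2*Ek - (Ec n (\<lambda>d y. d))^2"
    unfolding var_formula[OF n] d2 Ec_Fq[OF n] by (simp add: algebra_simps)
  then have "\<bar>variance (Tn n) - real n * s2\<bar> \<le> \<bar>Fq (1 - mm) 1\<bar> + \<bar>s2\<bar> + \<bar>2*mm*e3\<bar> + \<bar>2*mm^2*1\<bar>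
      + \<bar>2*mm^3*Ey\<bar> + \<bar>2*Ek\<bar> + \<bar>(Ec n (\<lambda>d y. d))^2\<bar>"
    using abs7 by metis
  moreover have "\<bar>2*Ek\<bar> \<le> 2*Kb" using bEk by simp
  moreover have "\<bar>(Ec n (\<lambda>d y. d))^2\<bar> \<le> 4" using t4 by simp
  ultimately show ?thesis using t1 t2 t3 s2_pos by linarith
qed

lemma var_limit: "(\<lambda>n. variance (Tn n) / real n) \<longlonglongrightarrow> s2"
proof -
  define C where "C = \<bar>Fq (1 - mm) 1\<bar> + s2 + 16 + 2 + 2 + 2 * Kb + 4"
  have ev: "eventually (\<lambda>n. \<bar>variance (Tn n) / real n - s2\<bar> \<le> C / real n) sequentially"
    using eventually_ge_at_top[of 1]
  proof eventually_elim
    case (elim n)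
    then have "\<bar>variance (Tn n) / real n - s2\<bar> = \<bar>variance (Tn n) - real n * s2\<bar> / real n"
      by (simp add: field_simps)
    also have "\<dots> \<le> C / real n" unfolding C_def using var_approx[OF elim] by (intro divide_right_mono) auto
    finally show ?case .
  qed
  have "(\<lambda>n. C / real n) \<longlonglongrightarrow> 0" by (rule lim_const_over_n)
  then have "(\<lambda>n. variance (Tn n) / real n - s2) \<longlonglongrightarrow> 0"
    using Lim_null_comparison[of "\<lambda>n. variance (Tn n) / real n - s2" "\<lambda>n. C / real n" sequentially] ev by simp
  then show ?thesis by (simp add: LIM_zero_iff)
qed

end

context erw_prob begin

definition "Phi n s = Ec n (\<lambda>d y. iexp (s * d) * fs s y)"

lemma Tc_iexp_fs: "Tc (\<lambda>d y. iexp (s * d) * fs s y) = (\<lambda>d y. iexp (s * d) * Bf s y)"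
  unfolding Bf_def by (intro ext) (rule TcW_iexp)

lemma norm_iexp: "norm (iexp x) = 1" by simp

lemma Phi_rec:
  assumes n: "1 \<le> n" and s: "\<bar>s\<bar> \<le> 1"
  shows "norm (Phi (Suc n) s - mu s *\<^sub>R Phi n s) \<le> Cc * \<bar>s\<bar>^3"
proof -
  have "Phi (Suc n) s - mu s *\<^sub>R Phi n s = Ec n (\<lambda>d y. iexp (s * d) * Bf s y - mu s *\<^sub>R (iexp (s * d) * fs s y))"
    unfolding Phi_def Ec_step[OF n] Tc_iexp_fs Ec_diff[OF n] Ec_scale[OF n] ..
  also have "norm \<dots> \<le> Cc * \<bar>s\<bar>^3"
  proof (rule Ec_bound[OF n])
    fix d y :: real assume y: "\<bar>y\<bar> \<le> 1"
    have "iexp (s * d) * Bf s y - mu s *\<^sub>R (iexp (s * d) * fs s y) = iexp (s * d) * (Bf s y - complex_of_real (mu s) * fs s y)"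
      by (simp add: scaleR_conv_of_real algebra_simps)
    then show "norm (iexp (s * d) * Bf s y - mu s *\<^sub>R (iexp (s * d) * fs s y)) \<le> Cc * \<bar>s\<bar>^3"
      using Bf_bound[OF s y] by (simp add: norm_mult)
  qed
  finally show ?thesis .
qed

lemma Cc_nonneg: "Cc \<ge> 0" unfolding Cc_def using Kb_nonneg s2_pos by simp

lemma Phi_approx:
  assumes n: "1 \<le> n" and s: "\<bar>s\<bar> \<le> 1" and mu: "\<bar>mu s\<bar> \<le> 1"
  shows "norm (Phi n s - (mu s)^(n-1) *\<^sub>R Phi 1 s) \<le> (real n - 1) * Cc * \<bar>s\<bar>^3"
  using n
proof (induction n rule: dec_induct)
  case base then show ?case by simp
next
  case (step n)
  obtain k where k: "n = Suc k" using step(1) by (cases n) auto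
  have "Phi (Suc n) s - (mu s)^(Suc n - 1) *\<^sub>R Phi 1 s
      = (Phi (Suc n) s - mu s *\<^sub>R Phi n s) + mu s *\<^sub>R (Phi n s - (mu s)^(n-1) *\<^sub>R Phi 1 s)"
    using k by (simp add: algebra_simps)
  also have "norm \<dots> \<le> Cc * \<bar>s\<bar>^3 + 1 * ((real n - 1) * Cc * \<bar>s\<bar>^3)"
  proof (rule order.trans[OF norm_triangle_ineq add_mono])
    show "norm (Phi (Suc n) s - mu s *\<^sub>R Phi n s) \<le> Cc * \<bar>s\<bar>^3" by (rule Phi_rec[OF step(1) s])
    show "norm (mu s *\<^sub>R (Phi n s - (mu s)^(n-1) *\<^sub>R Phi 1 s)) \<le> 1 * ((real n - 1) * Cc * \<bar>s\<bar>^3)"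
      unfolding norm_scaleR by (rule mult_mono[OF mu step.IH]) auto
  qed
  finally show ?case by (simp add: algebra_simps)
qed

lemma one_minus_fs: assumes y: "\<bar>y\<bar> \<le> 1" and s: "\<bar>s\<bar> \<le> 1" shows "norm (1 - fs s y) \<le> \<bar>s\<bar> + s^2 * Kb"
proof -
  have "1 - fs s y = - (\<i> * complex_of_real (s * (mm * y)) + complex_of_real (s^2 * kk y))"
    unfolding fs_def by simp
  then have "norm (1 - fs s y) = norm (\<i> * complex_of_real (s * (mm * y)) + complex_of_real (s^2 * kk y))"
    by (simp only: norm_minus_cancel)
  also have "\<dots> \<le> \<bar>s * (mm * y)\<bar> + \<bar>s^2 * kk y\<bar>" by (rule norm_ii_plus)
  also have "\<dots> \<le> \<bar>s\<bar> + s^2 * Kb"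
  proof (intro add_mono)
    have "\<bar>mm\<bar> * \<bar>y\<bar> \<le> 1" using abs_mm y by (intro mult_le_one) auto
    then show "\<bar>s * (mm * y)\<bar> \<le> \<bar>s\<bar>" by (simp add: abs_mult mult_left_le)
    show "\<bar>s^2 * kk y\<bar> \<le> s^2 * Kb" using kk_bound[OF y] by (simp add: abs_mult mult_left_mono)
  qed
  finally show ?thesis .
qed

lemma charE_vs_Phi:
  assumes n: "1 \<le> n" and s: "\<bar>s\<bar> \<le> 1"
  shows "norm (Ec n (\<lambda>d y. iexp (s * d)) - Phi n s) \<le> \<bar>s\<bar> + s^2 * Kb"
proof -
  have "Ec n (\<lambda>d y. iexp (s * d)) - Phi n s = Ec n (\<lambda>d y. iexp (s * d) - iexp (s * d) * fs s y)"
    unfolding Phi_def Ec_diff[OF n] ..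
  also have "norm \<dots> \<le> \<bar>s\<bar> + s^2 * Kb"
  proof (rule Ec_bound[OF n])
    fix d y :: real assume y: "\<bar>y\<bar> \<le> 1"
    have "iexp (s * d) - iexp (s * d) * fs s y = iexp (s * d) * (1 - fs s y)" by (simp add: algebra_simps)
    then show "norm (iexp (s * d) - iexp (s * d) * fs s y) \<le> \<bar>s\<bar> + s^2 * Kb"
      using one_minus_fs[OF y s] by (simp add: norm_mult)
  qed
  finally show ?thesis .
qed

lemma Phi1: "Phi 1 s = iexp (s * (1 - mm)) * fs s 1"
  unfolding Phi_def Ec_one ..

lemma mu_le1: assumes "s2 * s^2 \<le> 2" shows "\<bar>mu s\<bar> \<le> 1"
proof -
  have "0 \<le> s2 * s^2" using s2_pos by simp
  then show ?thesis using assms unfolding mu_def by (simp add: abs_le_iff)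
qed

theorem char_limit_Ec:
  "(\<lambda>n. Ec n (\<lambda>d y. iexp ((\<theta> / sqrt (real n)) * d))) \<longlonglongrightarrow> complex_of_real (exp (- s2 * \<theta>^2 / 2))"
proof -
  define sn where "sn n = \<theta> / sqrt (real n)" for n
  have l1: "(\<lambda>n. (real n - 1) / (sqrt (real n))^3) \<longlonglongrightarrow> 0" by real_asymp
  have l2: "(\<lambda>n. 1 / sqrt (real n)) \<longlonglongrightarrow> 0" by real_asymp
  have l3: "(\<lambda>n. 1 / real n) \<longlonglongrightarrow> 0" by real_asymp
  have sn0: "sn \<longlonglongrightarrow> 0"
  proof -
    have "(\<lambda>n. \<theta> * (1 / sqrt (real n))) \<longlonglongrightarrow> \<theta> * 0" by (intro tendsto_intros l2)
    then show ?thesis unfolding sn_def by simp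
  qed
  have ev1: "eventually (\<lambda>n. \<bar>sn n\<bar> \<le> 1) sequentially"
    using sn0 by (simp add: tendsto_iff dist_real_def) (metis (mono_tags, lifting) eventually_mono zero_less_one less_imp_le)
  have ev2: "eventually (\<lambda>n. s2 * (sn n)^2 \<le> 2) sequentially"
  proof -
    have "(\<lambda>n. s2 * (sn n)^2) \<longlonglongrightarrow> s2 * 0^2" by (intro tendsto_intros sn0)
    then have "eventually (\<lambda>n. s2 * (sn n)^2 < 2) sequentially" by (intro order_tendstoD) auto
    then show ?thesis by (auto elim: eventually_mono)
  qed
  define bnd where "bnd n = (real n - 1) * Cc * \<bar>sn n\<bar>^3 + (\<bar>sn n\<bar> + (sn n)^2 * Kb)" for n
  have bnd0: "bnd \<longlonglongrightarrow> 0"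
  proof -
    have "(\<lambda>n. Cc * \<bar>\<theta>\<bar>^3 * ((real n - 1) / (sqrt (real n))^3) + (\<bar>\<theta>\<bar> * (1 / sqrt (real n)) + \<theta>^2 * Kb * (1 / real n)))
        \<longlonglongrightarrow> Cc * \<bar>\<theta>\<bar>^3 * 0 + (\<bar>\<theta>\<bar> * 0 + \<theta>^2 * Kb * 0)"
      by (intro tendsto_intros l1 l2 l3)
    moreover have "eventually (\<lambda>n. Cc * \<bar>\<theta>\<bar>^3 * ((real n - 1) / (sqrt (real n))^3) + (\<bar>\<theta>\<bar> * (1 / sqrt (real n)) + \<theta>^2 * Kb * (1 / real n)) = bnd n) sequentially"
      using eventually_ge_at_top[of 1]
      by eventually_elim (simp add: bnd_def sn_def abs_divide power_divide)
    ultimately show ?thesis by (simp add: Lim_transform_eventually)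
  qed
  have evb: "eventually (\<lambda>n. norm (Ec n (\<lambda>d y. iexp (sn n * d)) - complex_of_real ((mu (sn n))^(n-1)) * Phi 1 (sn n)) \<le> bnd n) sequentially"
    using ev1 ev2 eventually_ge_at_top[of 1]
  proof eventually_elim
    case (elim n)
    have "norm (Ec n (\<lambda>d y. iexp (sn n * d)) - complex_of_real ((mu (sn n))^(n-1)) * Phi 1 (sn n))
        \<le> norm (Ec n (\<lambda>d y. iexp (sn n * d)) - Phi n (sn n)) + norm (Phi n (sn n) - (mu (sn n))^(n-1) *\<^sub>R Phi 1 (sn n))"
      by (rule order.trans[OF _ norm_triangle_ineq]) (simp add: scaleR_conv_of_real)
    also have "\<dots> \<le> (\<bar>sn n\<bar> + (sn n)^2 * Kb) + (real n - 1) * Cc * \<bar>sn n\<bar>^3"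
      using charE_vs_Phi[OF elim(3) elim(1)] Phi_approx[OF elim(3) elim(1) mu_le1[OF elim(2)]] by (rule add_mono)
    finally show ?case unfolding bnd_def by simp
  qed
  have A: "(\<lambda>n. Ec n (\<lambda>d y. iexp (sn n * d)) - complex_of_real ((mu (sn n))^(n-1)) * Phi 1 (sn n)) \<longlonglongrightarrow> 0"
    using Lim_null_comparison[OF evb bnd0] .
  define x where "x = - s2 * \<theta>^2 / 2"
  have mu_eq: "eventually (\<lambda>n. mu (sn n) = 1 + x / real n) sequentially"
    using eventually_ge_at_top[of 1]
    by eventually_elim (simp add: mu_def sn_def x_def power_divide)
  have B0: "(\<lambda>n. (1 + x / real n)^n) \<longlonglongrightarrow> exp x" by (rule tendsto_exp_limit_sequentially)
  have B1: "(\<lambda>n. (1 + x / real n)) \<longlonglongrightarrow> 1" by real_asymp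
  have "eventually (\<lambda>n. (1 + x / real n)^(n-1) = (1 + x / real n)^n / (1 + x / real n)) sequentially"
  proof -
    have "eventually (\<lambda>n. (1 + x / real n) > 0) sequentially" using B1 by (intro order_tendstoD) auto
    then show ?thesis using eventually_ge_at_top[of 1]
    proof eventually_elim
      case (elim n)
      then obtain k where "n = Suc k" by (cases n) auto
      then show ?case using elim by simp
    qed
  qed
  then have ev3: "eventually (\<lambda>n. (1 + x / real n)^n / (1 + x / real n) = (mu (sn n))^(n-1)) sequentially"
    using mu_eq by eventually_elim simp
  have B: "(\<lambda>n. (mu (sn n))^(n-1)) \<longlonglongrightarrow> exp x"
    using Lim_transform_eventually[OF tendsto_divide[OF B0 B1] ev3] by simp
  have C: "(\<lambda>n. Phi 1 (sn n)) \<longlonglongrightarrow> 1"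
  proof -
    have "(\<lambda>n. iexp (sn n * (1 - mm)) * (1 + \<i> * complex_of_real (sn n * (mm * 1)) + complex_of_real ((sn n)^2 * kk 1)))
        \<longlonglongrightarrow> iexp (0 * (1 - mm)) * (1 + \<i> * complex_of_real (0 * (mm * 1)) + complex_of_real (0^2 * kk 1))"
      by (intro tendsto_intros sn0)
    then show ?thesis unfolding Phi1 fs_def by simp
  qed
  have "(\<lambda>n. (Ec n (\<lambda>d y. iexp (sn n * d)) - complex_of_real ((mu (sn n))^(n-1)) * Phi 1 (sn n))
       + complex_of_real ((mu (sn n))^(n-1)) * Phi 1 (sn n)) \<longlonglongrightarrow> 0 + complex_of_real (exp x) * 1"
    by (intro tendsto_intros A B C)
  then show ?thesis unfolding sn_def x_def by simp
qed

end

context erw_prob begin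

definition "Uc n w = (Tn n w - real n * mm) / sqrt (real n)"

lemma Uc_meas[measurable]: "Uc n \<in> borel_measurable M"
  unfolding Uc_def using Tn_meas[of n] by measurable

lemma Tn_V: "Tn n w = fst (snd (V n w))" unfolding Tn_def V_def vcore_def by simp
lemma V_eq: "V n w = (cl (X1 w), Tn n w, ycore (samp w) n)" unfolding Tn_def V_def vcore_def by (simp add: samp_Inl)

lemma char_Uc: assumes n: "1 \<le> n"
  shows "char (distr M borel (\<lambda>w. c * Uc n w)) \<theta> = Ec n (\<lambda>d y. iexp ((c * \<theta> / sqrt (real n)) * d))"
proof -
  have "char (distr M borel (\<lambda>w. c * Uc n w)) \<theta> = integral\<^sup>L M (\<lambda>w. iexp (\<theta> * (c * Uc n w)))"
    unfolding char_def by (subst integral_distr) (auto simp: comp_def)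
  also have "\<dots> = EE n (cen n (\<lambda>d y. iexp ((c * \<theta> / sqrt (real n)) * d)))"
    unfolding EE_def
  proof (intro Bochner_Integration.integral_cong refl)
    fix w
    have eq: "\<theta> * (c * Uc n w) = (c * \<theta> / sqrt (real n)) * (Tn n w - real n * mm)"
      unfolding Uc_def by (simp add: divide_inverse mult_ac)
    show "iexp (\<theta> * (c * Uc n w)) = cen n (\<lambda>d y. iexp ((c * \<theta> / sqrt (real n)) * d)) (V n w)"
      unfolding eq V_eq cen_def by simp
  qed
  finally show ?thesis unfolding Ec_def .
qed

definition "Nm = density lborel (normal_density 0 (sqrt s2))"

lemma Nm_distr: "distr std_normal_distribution lborel (\<lambda>x. sqrt s2 * x) = Nm"
proof -
  have pN: "prob_space std_normal_distribution" by (rule prob_space_normal_density) simp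
  have d: "distributed std_normal_distribution lborel (\<lambda>x. x) std_normal_density"
    unfolding distributed_def by (auto simp: distr_id2)
  have "distributed std_normal_distribution lborel (\<lambda>x. 0 + sqrt s2 * x) (normal_density (0 + sqrt s2 * 0) (\<bar>sqrt s2\<bar> * 1))"
    using s2_pos prob_space.normal_density_affine[OF pN d zero_less_one, of "sqrt s2" 0] by simp
  then show ?thesis unfolding distributed_def Nm_def using s2_pos by simp
qed

lemma Nm_rd: "real_distribution Nm"
  unfolding Nm_def real_distribution_def real_distribution_axioms_def using prob_space_normal_density s2_pos by simp

lemma char_Nm: "char Nm \<theta> = complex_of_real (exp (- s2 * \<theta>^2 / 2))"
proof -
  have "char Nm \<theta> = integral\<^sup>L std_normal_distribution (\<lambda>x. iexp (\<theta> * (sqrt s2 * x)))"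
    unfolding Nm_distr[symmetric] char_def by (subst integral_distr) (auto simp: comp_def)
  also have "\<dots> = char std_normal_distribution (\<theta> * sqrt s2)"
    unfolding char_def by (simp add: mult.assoc)
  also have "\<dots> = complex_of_real (exp (- s2 * \<theta>^2 / 2))"
    using s2_pos by (simp add: char_std_normal_distribution power_mult_distrib)
  finally show ?thesis .
qed

lemma Nm_cont: "isCont (cdf Nm) x"
proof -
  have "AE y in lborel. y \<in> {x} \<longrightarrow> normal_density 0 (sqrt s2) y = 0"
    using AE_lborel_singleton[of x] by eventually_elim auto
  then have "{x} \<in> null_sets Nm" unfolding Nm_def by (subst null_sets_density_iff) auto
  then have "emeasure Nm {x} = 0" by (rule null_setsD1)
  then show ?thesis by (simp add: finite_borel_measure.isCont_cdf[OF real_distribution.finite_borel_measure_M[OF Nm_rd]] measure_def)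
qed

lemma cUc_conv: assumes c: "c = 1 \<or> c = -1"
  shows "(\<lambda>n. cdf (distr M borel (\<lambda>w. c * Uc n w)) z) \<longlonglongrightarrow> cdf Nm z"
proof -
  have "weak_conv_m (\<lambda>n. distr M borel (\<lambda>w. c * Uc n w)) Nm"
  proof (rule levy_continuity)
    show "real_distribution (distr M borel (\<lambda>w. c * Uc n w))" for n by (intro real_distribution_distr) measurable
    show "real_distribution Nm" by (rule Nm_rd)
    fix t
    have lim: "(\<lambda>n. Ec n (\<lambda>d y. iexp ((c * t) / sqrt (real n) * d))) \<longlonglongrightarrow> complex_of_real (exp (- s2 * (c * t)^2 / 2))"
      by (rule char_limit_Ec)
    have ev: "eventually (\<lambda>n. Ec n (\<lambda>d y. iexp ((c * t) / sqrt (real n) * d)) = char (distr M borel (\<lambda>w. c * Uc n w)) t) sequentially"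
      using eventually_ge_at_top[of 1] by eventually_elim (simp add: char_Uc)
    have "(c * t)^2 = t^2" using c by auto
    then show "(\<lambda>n. char (distr M borel (\<lambda>w. c * Uc n w)) t) \<longlonglongrightarrow> char Nm t"
      using Lim_transform_eventually[OF lim ev] by (simp add: char_Nm)
  qed
  then show ?thesis using Nm_cont unfolding weak_conv_m_def weak_conv_def by blast
qed

lemma prob_EE: "1 \<le> n \<Longrightarrow> prob {w\<in>space M. P (V n w)} = EE n (\<lambda>v. if P v then 1 else 0::real)"
proof -
  assume n: "1 \<le> n"
  have "EE n (\<lambda>v. if P v then 1 else 0::real) = integral\<^sup>L M (indicator {w\<in>space M. P (V n w)})"
    unfolding EE_def by (intro Bochner_Integration.integral_cong refl) (auto simp: indicator_def)
  also have "\<dots> = prob {w\<in>space M. P (V n w)}" by (simp add: Int_absorb2)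
  finally show ?thesis by simp
qed

lemma cdf_distr_prob: "f \<in> borel_measurable M \<Longrightarrow> cdf (distr M borel f) z = prob {w\<in>space M. f w \<le> z}"
  unfolding cdf_def by (subst measure_distr) (auto simp: vimage_def Int_def conj_commute)

lemma V_fst: "fst (V n w) = cl (X1 w)" unfolding V_def vcore_def by (simp add: samp_Inl)

lemma clean_cdf:
  assumes n: "1 \<le> n"
  shows "prob {w\<in>space M. cl (X1 w) * Uc n w \<le> z}
     = p * cdf (distr M borel (\<lambda>w. 1 * Uc n w)) z + q * cdf (distr M borel (\<lambda>w. (-1) * Uc n w)) z
       + r * (if 0 \<le> z then 1 else 0)"
proof -
  define F where "F = (\<lambda>(x::real,t::real,y::real). if x * ((t - real n * mm) / sqrt (real n)) \<le> z then 1 else (0::real))"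
  have "prob {w\<in>space M. cl (X1 w) * Uc n w \<le> z} = prob {w\<in>space M. F (V n w) = 1}"
    unfolding F_def Uc_def V_eq by (intro arg_cong[where f=prob]) auto
  also have "\<dots> = EE n (\<lambda>v. if F v = 1 then 1 else 0)" by (rule prob_EE[OF n])
  also have "EE n (\<lambda>v. if F v = 1 then 1 else 0) = EE n F"
    by (intro arg_cong[where f="EE n"]) (auto simp: F_def fun_eq_iff)
  also have "\<dots> = p * EE n (fixx 1 F) + q * EE n (fixx (-1) F) + r * EE n (fixx 0 F)"
    using E_fact[OF n, of F] by simp
  also have "EE n (fixx 0 F) = (if 0 \<le> z then 1 else 0)"
  proof -
    have "fixx 0 F = (\<lambda>v. if 0 \<le> z then 1 else 0)" by (auto simp: fun_eq_iff fixx_def F_def)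
    then show ?thesis by (cases "0 \<le> z") (simp_all add: E_const[OF n])
  qed
  finally have main: "prob {w\<in>space M. cl (X1 w) * Uc n w \<le> z} = p * EE n (fixx 1 F) + q * EE n (fixx (-1) F) + r * (if 0 \<le> z then 1 else 0)" .
  have hc: "EE n (fixx c F) = cdf (distr M borel (\<lambda>w. c * Uc n w)) z" for c
  proof -
    have "cdf (distr M borel (\<lambda>w. c * Uc n w)) z = prob {w\<in>space M. c * Uc n w \<le> z}"
      by (rule cdf_distr_prob) measurable
    also have "\<dots> = prob {w\<in>space M. fixx c F (V n w) = 1}"
      unfolding F_def fixx_def Uc_def V_eq by (intro arg_cong[where f=prob]) auto
    also have "\<dots> = EE n (\<lambda>v. if fixx c F v = 1 then 1 else 0)" by (rule prob_EE[OF n])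
    also have "EE n (\<lambda>v. if fixx c F v = 1 then 1 else 0) = EE n (fixx c F)"
      by (intro arg_cong[where f="EE n"]) (auto simp: F_def fixx_def fun_eq_iff)
    finally show ?thesis by simp
  qed
  show ?thesis unfolding main hc ..
qed

end

declare eX.simps[simp del]

lemma eX_factor: "eX X1 eta K n w = X1 w * eX (\<lambda>_. 1) eta K n w"
proof (induction n rule: less_induct)
  case (less n)
  show ?case
  proof (cases "3 \<le> n")
    case True
    show ?thesis
    proof (cases "1 \<le> K n w \<and> K n w < n")
      case k: True
      have "eX X1 eta K n w = eta n w * eX X1 eta K (K n w) w" using True k by (subst eX.simps) simp
      also have "\<dots> = eta n w * (X1 w * eX (\<lambda>_. 1) eta K (K n w) w)" using less k by simp
      also have "\<dots> = X1 w * eX (\<lambda>_. 1) eta K n w" using True k by (subst (2) eX.simps) simp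
      finally show ?thesis .
    next
      case False
      have a: "eX X1 eta K n w = 0" using True False by (subst eX.simps) auto
      have b: "eX (\<lambda>_. 1) eta K n w = 0" using True False by (subst eX.simps) auto
      show ?thesis unfolding a b by simp
    qed
  next
    case False
    then consider "n = 0" | "n = 1" | "n = 2" by linarith
    then show ?thesis
    proof cases
      case 1
      have a: "eX X1 eta K n w = 0" using 1 by (subst eX.simps) simp
      have b: "eX (\<lambda>_. 1) eta K n w = 0" using 1 by (subst eX.simps) simp
      show ?thesis unfolding a b by simp
    next
      case 2
      have a: "eX X1 eta K n w = X1 w" using 2 by (subst eX.simps) simp
      have b: "eX (\<lambda>_. 1) eta K n w = 1" using 2 by (subst eX.simps) simp
      show ?thesis unfolding a b by simp
    next
      case 3
      have a: "eX X1 eta K n w = eta 2 w * X1 w" using 3 by (subst eX.simps) simp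
      have b: "eX (\<lambda>_. 1) eta K n w = eta 2 w * 1" using 3 by (subst eX.simps) simp
      show ?thesis unfolding a b by simp
    qed
  qed
qed

lemma eS_factor: "eS X1 eta K n w = X1 w * eS (\<lambda>_. 1) eta K n w"
  unfolding eS_def by (subst eX_factor) (simp add: sum_distrib_left)

lemma cl_id: "v \<in> {1,-1,0} \<Longrightarrow> cl v = v" unfolding cl_def by auto

context erw_prob begin

lemma eX_meas: assumes X': "X' \<in> borel_measurable M" shows "(\<lambda>w. eX X' eta K n w) \<in> borel_measurable M"
proof (induction n rule: less_induct)
  case (less n)
  consider "n = 1" | "n = 2" | "3 \<le> n" | "n = 0" by linarith
  then show ?case
  proof cases
    case 1 then show ?thesis using X' by (subst eX.simps) simp
  next
    case 2
    have "(\<lambda>w. eta 2 w * X' w) \<in> borel_measurable M" using X' etam[of 2] by measurable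
    then show ?thesis using 2 by (subst eX.simps) simp
  next
    case 3
    have eq: "(\<lambda>w. eX X' eta K n w) = (\<lambda>w. \<Sum>j\<in>{1..<n}. if K n w = j then eta n w * eX X' eta K j w else 0)"
    proof (rule ext)
      fix w
      show "eX X' eta K n w = (\<Sum>j\<in>{1..<n}. if K n w = j then eta n w * eX X' eta K j w else 0)"
        using 3 by (subst eX.simps) (simp add: sum.delta')
    qed
    have "(\<lambda>w. \<Sum>j\<in>{1..<n}. if K n w = j then eta n w * eX X' eta K j w else 0) \<in> borel_measurable M"
    proof (intro borel_measurable_sum measurable_If)
      fix j assume j: "j \<in> {1..<n}"
      show "(\<lambda>w. eta n w * eX X' eta K j w) \<in> borel_measurable M"
        using less[of j] j etam[of n] 3 by (intro borel_measurable_times) auto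
      show "{w \<in> space M. K n w = j} \<in> sets M" using K_sets[of n j] 3 by simp
    qed simp
    then show ?thesis unfolding eq .
  next
    case 4 then show ?thesis by (subst eX.simps) simp
  qed
qed

definition "good w \<longleftrightarrow> (\<forall>k. 2 \<le> k \<longrightarrow> eta k w \<in> {1,-1,0}) \<and> (\<forall>k. 3 \<le> k \<longrightarrow> K k w = 1 \<or> K k w = k - 1) \<and> X1 w \<in> {1,-1,0}"

lemma AE_good: "AE w in M. good w"
proof -
  have a: "AE w in M. \<forall>k. 2 \<le> k \<longrightarrow> eta k w \<in> {1,-1,0}"
  proof (subst AE_all_countable, intro allI)
    fix k show "AE w in M. 2 \<le> k \<longrightarrow> eta k w \<in> {1,-1,0}"
    proof (cases "2 \<le> k")
      case True then show ?thesis using AE_eta[OF True] by (auto elim: eventually_mono)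
    qed simp
  qed
  have b: "AE w in M. \<forall>k. 3 \<le> k \<longrightarrow> K k w = 1 \<or> K k w = k - 1"
  proof (subst AE_all_countable, intro allI)
    fix k show "AE w in M. 3 \<le> k \<longrightarrow> K k w = 1 \<or> K k w = k - 1"
    proof (cases "3 \<le> k")
      case True then show ?thesis using AE_K[OF True] by (auto elim: eventually_mono)
    qed simp
  qed
  show ?thesis using a b AE_X1 unfolding good_def by eventually_elim auto
qed

lemma eX_clean: assumes g: "good w" shows "1 \<le> n \<Longrightarrow> eX (\<lambda>_. 1) eta K n w = ycore (samp w) n"
proof (induction n rule: less_induct)
  case (less n)
  consider "n = 1" | "n = 2" | "3 \<le> n" using less.prems by linarith
  then show ?case
  proof cases
    case 1 then show ?thesis by (subst eX.simps) simp
  next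
    case 2
    have "eta 2 w \<in> {1,-1,0}" using g unfolding good_def by auto
    then show ?thesis using 2 by (subst eX.simps) (simp add: numeral_2_eq_2 samp_Inl cl_id)
  next
    case 3
    then obtain m where m: "n = Suc m" "2 \<le> m" by (cases n) auto
    have e: "eta n w \<in> {1,-1,0}" using g 3 unfolding good_def by auto
    have "K n w = 1 \<or> K n w = n - 1" using g 3 unfolding good_def by blast
    then have k: "K n w = 1 \<or> K n w = m" using m by simp
    then show ?thesis
    proof
      assume k1: "K n w = 1"
      have "eX (\<lambda>_. 1) eta K n w = eta n w * eX (\<lambda>_. 1) eta K 1 w" using 3 k1 by (subst eX.simps) simp
      also have "eX (\<lambda>_. 1) eta K 1 w = 1" by (subst eX.simps) simp
      finally show ?thesis using m k1 e by (simp add: samp_Inl samp_Inr cl_id)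
    next
      assume km: "K n w = m"
      have "eX (\<lambda>_. 1) eta K n w = eta n w * eX (\<lambda>_. 1) eta K m w" using 3 km m by (subst eX.simps) simp
      also have "eX (\<lambda>_. 1) eta K m w = ycore (samp w) m" using less.IH[of m] m by simp
      finally show ?thesis using m km e by (simp add: samp_Inl samp_Inr cl_id)
    qed
  qed
qed

lemma eS_clean: "good w \<Longrightarrow> eS (\<lambda>_. 1) eta K n w = Tn n w"
  unfolding eS_def Tn_def tcore_def by (intro sum.cong refl eX_clean) auto

lemma eS_meas: "X' \<in> borel_measurable M \<Longrightarrow> eS X' eta K n \<in> borel_measurable M"
  unfolding eS_def[abs_def] by (intro borel_measurable_sum eX_meas)

lemma var_eq: "variance (eS (\<lambda>_. 1) eta K n) = variance (Tn n)"
proof -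
  have m1: "eS (\<lambda>_. 1) eta K n \<in> borel_measurable M" by (rule eS_meas) simp
  have ae: "AE w in M. eS (\<lambda>_. 1) eta K n w = Tn n w" using AE_good by eventually_elim (rule eS_clean)
  have e: "expectation (eS (\<lambda>_. 1) eta K n) = expectation (Tn n)"
    using m1 Tn_meas ae by (rule integral_cong_AE)
  show ?thesis unfolding e using m1 Tn_meas ae by (intro integral_cong_AE) (measurable, auto elim: eventually_mono)
qed

theorem main_thm:
  "convergent (\<lambda>n. variance (eS (\<lambda>_. 1) eta K n) / real n)
   \<and> weak_conv
       (\<lambda>n. cdf (distr M borel (\<lambda>w. (eS X1 eta K n w - real n * ((p - q) * X1 w / (2 + q - p))) / sqrt (real n))))
       (\<lambda>x. (p + q) * normal_cdf_var (lim (\<lambda>n. variance (eS (\<lambda>_. 1) eta K n) / real n)) x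
             + r * (if 0 \<le> x then 1 else 0))"
proof -
  have vl: "(\<lambda>n. variance (eS (\<lambda>_. 1) eta K n) / real n) \<longlonglongrightarrow> s2"
    unfolding var_eq by (rule var_limit)
  then have lim: "lim (\<lambda>n. variance (eS (\<lambda>_. 1) eta K n) / real n) = s2" by (rule limI)
  have nc: "normal_cdf_var s2 x = cdf Nm x" for x
    using s2_pos unfolding normal_cdf_var_def Nm_def by simp
  define Z where "Z n w = (eS X1 eta K n w - real n * ((p - q) * X1 w / (2 + q - p))) / sqrt (real n)" for n w
  have Zm: "Z n \<in> borel_measurable M" for n
    unfolding Z_def using eS_meas[OF X1m, of n] X1m by measurable
  have conv: "(\<lambda>n. cdf (distr M borel (Z n)) x) \<longlonglongrightarrow> (p + q) * cdf Nm x + r * (if 0 \<le> x then 1 else 0)" for x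
  proof -
    have ev: "eventually (\<lambda>n. p * cdf (distr M borel (\<lambda>w. 1 * Uc n w)) x + q * cdf (distr M borel (\<lambda>w. (-1) * Uc n w)) x
        + r * (if 0 \<le> x then 1 else 0) = cdf (distr M borel (Z n)) x) sequentially"
      using eventually_ge_at_top[of 1]
    proof eventually_elim
      case (elim n)
      have ae: "AE w in M. Z n w = cl (X1 w) * Uc n w"
        using AE_good
      proof eventually_elim
        case (elim w)
        have x1: "cl (X1 w) = X1 w" using elim unfolding good_def by (auto intro: cl_id)
        have "Z n w = X1 w * ((Tn n w - real n * mm) / sqrt (real n))"
          unfolding Z_def eS_factor[of X1] eS_clean[OF elim] mm_def using den1
          by (simp add: field_simps)
        then show ?case unfolding x1 Uc_def .
      qed
      have "cdf (distr M borel (Z n)) x = prob {w\<in>space M. Z n w \<le> x}" by (rule cdf_distr_prob[OF Zm])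
      also have "\<dots> = prob {w\<in>space M. cl (X1 w) * Uc n w \<le> x}"
      proof (rule measure_eq_AE)
        show "AE w in M. (w \<in> {w\<in>space M. Z n w \<le> x}) = (w \<in> {w\<in>space M. cl (X1 w) * Uc n w \<le> x})"
          using ae by eventually_elim auto
        show "{w\<in>space M. Z n w \<le> x} \<in> sets M" using Zm by measurable
        show "{w\<in>space M. cl (X1 w) * Uc n w \<le> x} \<in> sets M" using X1m by measurable
      qed
      also have "\<dots> = p * cdf (distr M borel (\<lambda>w. 1 * Uc n w)) x + q * cdf (distr M borel (\<lambda>w. (-1) * Uc n w)) x
        + r * (if 0 \<le> x then 1 else 0)" by (rule clean_cdf[OF elim])
      finally show ?case by simp
    qed
    have "(\<lambda>n. p * cdf (distr M borel (\<lambda>w. 1 * Uc n w)) x + q * cdf (distr M borel (\<lambda>w. (-1) * Uc n w)) x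
        + r * (if 0 \<le> x then 1 else 0)) \<longlonglongrightarrow> p * cdf Nm x + q * cdf Nm x + r * (if 0 \<le> x then 1 else 0)"
      by (intro tendsto_intros cUc_conv) auto
    then have "(\<lambda>n. cdf (distr M borel (Z n)) x) \<longlonglongrightarrow> p * cdf Nm x + q * cdf Nm x + r * (if 0 \<le> x then 1 else 0)"
      using ev by (rule Lim_transform_eventually)
    then show ?thesis by (simp add: algebra_simps)
  qed
  show ?thesis
    unfolding lim nc Z_def[symmetric] weak_conv_def
    using vl conv by (auto simp: convergent_def)
qed

end

theorem theorem8p2:
  fixes M :: "'a measure" and p q r :: real
    and X1 :: "'a \<Rightarrow> real" and eta :: "nat \<Rightarrow> 'a \<Rightarrow> real" and K :: "nat \<Rightarrow> 'a \<Rightarrow> nat"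
  assumes "prob_space M"
    and "0 < p" "p < 1" "0 < q" "q < 1" "0 < r" "r < 1" "p + q + r = 1"
    and "X1 \<in> borel_measurable M"
    and "\<And>n. 2 \<le> n \<Longrightarrow> eta n \<in> borel_measurable M"
    and "\<And>n. 3 \<le> n \<Longrightarrow> K n \<in> measurable M (count_space UNIV)"
    and "measure M {w \<in> space M. X1 w = 1} = p"
    and "measure M {w \<in> space M. X1 w = -1} = q"
    and "measure M {w \<in> space M. X1 w = 0} = r"
    and "\<And>n. 2 \<le> n \<Longrightarrow> measure M {w \<in> space M. eta n w = 1} = p"
    and "\<And>n. 2 \<le> n \<Longrightarrow> measure M {w \<in> space M. eta n w = -1} = q"
    and "\<And>n. 2 \<le> n \<Longrightarrow> measure M {w \<in> space M. eta n w = 0} = r"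
    and "\<And>n. 3 \<le> n \<Longrightarrow> measure M {w \<in> space M. K n w = 1} = 1/2"
    and "\<And>n. 3 \<le> n \<Longrightarrow> measure M {w \<in> space M. K n w = n - 1} = 1/2"
    and "prob_space.indep_vars M (\<lambda>_. borel)
           (\<lambda>i. case i of Inl n \<Rightarrow> (if n = 1 then X1 else eta n)
                        | Inr n \<Rightarrow> (\<lambda>w. real (K n w)))
           (Inl ` {n. 1 \<le> n} \<union> Inr ` {n. 3 \<le> n})"
  shows "convergent (\<lambda>n. prob_space.variance M (eS (\<lambda>_. 1) eta K n) / real n)
       \<and> weak_conv
           (\<lambda>n. cdf (distr M borel (\<lambda>w. (eS X1 eta K n w
                   - real n * ((p - q) * X1 w / (2 + q - p))) / sqrt (real n))))
           (\<lambda>x. (p + q) * normal_cdf_var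
                   (lim (\<lambda>n. prob_space.variance M (eS (\<lambda>_. 1) eta K n) / real n)) x
                 + r * (if 0 \<le> x then 1 else 0))"
  proof -
  have "erw_prob p q r M X1 eta K"
    unfolding erw_prob_def erw_prob_axioms_def erw_par_def using assms by auto
  then interpret E: erw_prob p q r M X1 eta K .
  show ?thesis by (rule E.main_thm)
qed

end
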